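(* Let $E$ be a Banach lattice and let $\mathrm{r\text{-}l\text{-}Lwc}(E)$ denote the set of r-l-Lwc operators $E\to E$. (i) $\mathrm{r\text{-}l\text{-}Lwc}(E)$ is a subalgebra of the algebra $\mathrm{L}_r(E)$ of regular operators on $E$; moreover, $\mathrm{r\text{-}l\text{-}Lwc}(E)=\mathrm{L}_r(E)$ if and only if the identity $I_E$ is limitedly L-weakly compact. (ii) If $E$ is Dedekind complete, then $\mathrm{r\text{-}l\text{-}Lwc}(E)$ is a closed order ideal of the Banach lattice $(\mathrm{L}_r(E),\|\cdot\|_r)$, where $\|T\|_r:=\|\,|T|\,\|$ is the regular norm.
   Context: All vector spaces are real and operators are linear and bounded; $\mathrm{L}_r(E)$ is the space of regular operators on $E$ (differences of positive operators). For a subset $A$ of a Banach lattice $F$, $\mathrm{sol}(A)=\bigcup_{a\in A}[-|a|,|a|]$. A subset $A\subseteq F$ is an Lwc-set if every disjoint sequence in $\mathrm{sol}(A)$ is norm-null. A bounded subset $A$ of a Banach space $X$ is limited if every weak$^\ast$-null sequence in $X'$ converges to $0$ uniformly on $A$. An operator $T:X\to F$ is limitedly L-weakly compact if $T$ maps every limited subset of $X$ onto an Lwc-subset of $F$. An operator $T:E\to E$ is an r-l-Lwc operator if $T=T_1-T_2$ where $T_1,T_2$ are positive limitedly L-weakly compact operators. *)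

theory Defs
  imports "HOL-Analysis.Analysis"
begin

class banach_lattice = banach + ordered_real_vector + lattice +
  assumes lattice_norm: "sup x (- x) \<le> sup y (- y) \<Longrightarrow> norm x \<le> norm y"

definition labs :: "'a::banach_lattice \<Rightarrow> 'a" where
  "labs x = sup x (- x)"

definition dedekind_complete :: "'a::banach_lattice itself \<Rightarrow> bool" where
  "dedekind_complete (_::'a itself) \<longleftrightarrow>
     (\<forall>A::'a set. A \<noteq> {} \<and> bdd_above A \<longrightarrow>
        (\<exists>s. (\<forall>a\<in>A. a \<le> s) \<and> (\<forall>b. (\<forall>a\<in>A. a \<le> b) \<longrightarrow> s \<le> b)))"

definition sol :: "'a::banach_lattice set \<Rightarrow> 'a set" where
  "sol A = (\<Union>a\<in>A. {y. - labs a \<le> y \<and> y \<le> labs a})"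

definition disjoint_seq :: "(nat \<Rightarrow> 'a::banach_lattice) \<Rightarrow> bool" where
  "disjoint_seq x \<longleftrightarrow> (\<forall>n m. n \<noteq> m \<longrightarrow> inf (labs (x n)) (labs (x m)) = 0)"

definition Lwc_set :: "'a::banach_lattice set \<Rightarrow> bool" where
  "Lwc_set A \<longleftrightarrow> (\<forall>x. (\<forall>n. x n \<in> sol A) \<and> disjoint_seq x \<longrightarrow> (\<lambda>n. norm (x n)) \<longlonglongrightarrow> 0)"

definition limited_set :: "'a::real_normed_vector set \<Rightarrow> bool" where
  "limited_set A \<longleftrightarrow> bounded A \<and>
     (\<forall>f :: nat \<Rightarrow> 'a \<Rightarrow> real.
        (\<forall>n. bounded_linear (f n)) \<and> (\<forall>x. (\<lambda>n. f n x) \<longlonglongrightarrow> 0) \<longrightarrow>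
        (\<forall>e>0. \<exists>N. \<forall>n\<ge>N. \<forall>x\<in>A. \<bar>f n x\<bar> < e))"

definition limitedly_Lwc :: "('a::banach_lattice \<Rightarrow> 'a) \<Rightarrow> bool" where
  "limitedly_Lwc T \<longleftrightarrow> bounded_linear T \<and> (\<forall>A. limited_set A \<longrightarrow> Lwc_set (T ` A))"

definition pos_op :: "('a::banach_lattice \<Rightarrow> 'a) \<Rightarrow> bool" where
  "pos_op T \<longleftrightarrow> bounded_linear T \<and> (\<forall>x. 0 \<le> x \<longrightarrow> 0 \<le> T x)"

definition regular_ops :: "('a::banach_lattice \<Rightarrow> 'a) set" where
  "regular_ops = {T. \<exists>T1 T2. pos_op T1 \<and> pos_op T2 \<and> T = (\<lambda>x. T1 x - T2 x)}"

definition rlLwc_ops :: "('a::banach_lattice \<Rightarrow> 'a) set" where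
  "rlLwc_ops = {T. \<exists>T1 T2. pos_op T1 \<and> limitedly_Lwc T1 \<and> pos_op T2 \<and> limitedly_Lwc T2
                   \<and> T = (\<lambda>x. T1 x - T2 x)}"

definition op_le :: "('a::banach_lattice \<Rightarrow> 'a) \<Rightarrow> ('a \<Rightarrow> 'a) \<Rightarrow> bool" where
  "op_le S T \<longleftrightarrow> pos_op (\<lambda>x. T x - S x)"

text \<open>Modulus of a regular operator: the supremum of T and -T in L_r(E)
(exists when E is Dedekind complete).\<close>
definition op_abs :: "('a::banach_lattice \<Rightarrow> 'a) \<Rightarrow> ('a \<Rightarrow> 'a)" where
  "op_abs T = (THE M. M \<in> regular_ops \<and> op_le T M \<and> op_le (\<lambda>x. - T x) M \<and>
                  (\<forall>N\<in>regular_ops. op_le T N \<and> op_le (\<lambda>x. - T x) N \<longrightarrow> op_le M N))"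

definition reg_norm :: "('a::banach_lattice \<Rightarrow> 'a) \<Rightarrow> real" where
  "reg_norm T = onorm (op_abs T)"

definition is_subalgebra :: "('a::banach_lattice \<Rightarrow> 'a) set \<Rightarrow> ('a \<Rightarrow> 'a) set \<Rightarrow> bool" where
  "is_subalgebra I L \<longleftrightarrow> I \<subseteq> L \<and> (\<lambda>x. 0) \<in> I \<and>
     (\<forall>S\<in>I. \<forall>T\<in>I. (\<lambda>x. S x + T x) \<in> I) \<and>
     (\<forall>c::real. \<forall>T\<in>I. (\<lambda>x. c *\<^sub>R T x) \<in> I) \<and>
     (\<forall>S\<in>I. \<forall>T\<in>I. S \<circ> T \<in> I)"

definition is_order_ideal :: "('a::banach_lattice \<Rightarrow> 'a) set \<Rightarrow> bool" where
  "is_order_ideal I \<longleftrightarrow> I \<subseteq> regular_ops \<and> (\<lambda>x. 0) \<in> I \<and>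
     (\<forall>S\<in>I. \<forall>T\<in>I. (\<lambda>x. S x + T x) \<in> I) \<and>
     (\<forall>c::real. \<forall>T\<in>I. (\<lambda>x. c *\<^sub>R T x) \<in> I) \<and>
     (\<forall>S\<in>regular_ops. \<forall>T\<in>I. op_le (op_abs S) (op_abs T) \<longrightarrow> S \<in> I)"

definition reg_closed :: "('a::banach_lattice \<Rightarrow> 'a) set \<Rightarrow> bool" where
  "reg_closed I \<longleftrightarrow> (\<forall>T S. (\<forall>n. T n \<in> I) \<and> S \<in> regular_ops \<and>
       (\<lambda>n. reg_norm (\<lambda>x. T n x - S x)) \<longlonglongrightarrow> 0 \<longrightarrow> S \<in> I)"

end

theory Submission
  imports Defs "HOL-Library.Lattice_Algebras"
begin

context banach_lattice begin
subclass lattice_ab_group_add ..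
end

definition pos :: "'a::banach_lattice \<Rightarrow> 'a" where "pos x = sup x 0"

lemma labs_nonneg: "0 \<le> labs (x::'a::banach_lattice)"
proof -
  have "x \<le> labs x" "- x \<le> labs x" by (auto simp: labs_def)
  then have "0 \<le> labs x + labs x" using add_mono by fastforce
  then show ?thesis by simp
qed

lemma labs_pos_neg: "labs (x::'a::banach_lattice) = pos x + pos (- x)"
proof -
  have "pos x + pos (-x) = sup (x + sup (-x) 0) (0 + sup (-x) 0)"
    by (simp add: pos_def add_sup_distrib_right)
  also have "\<dots> = sup (sup 0 x) (sup (-x) 0)"
    by (simp add: add_sup_distrib_left)
  also have "\<dots> = sup 0 (labs x)" by (simp add: labs_def sup_aci)
  also have "\<dots> = labs x" using labs_nonneg[of x] by (simp add: sup_absorb2)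
  finally show ?thesis by simp
qed

lemma pos_minus_neg: "pos (x::'a::banach_lattice) - pos (- x) = x"
proof -
  have "pos x = x + sup 0 (-x)" by (simp add: pos_def add_sup_distrib_left)
  moreover have "pos (-x) = sup 0 (-x)" by (simp add: pos_def sup_commute)
  ultimately have "pos x = x + pos (-x)" by simp
  then show ?thesis by (metis add_diff_cancel)
qed

lemma pos_nonneg: "0 \<le> pos (x::'a::banach_lattice)" by (simp add: pos_def)
lemma pos_le_labs: "pos (x::'a::banach_lattice) \<le> labs x"
  using labs_nonneg[of x] by (simp add: pos_def labs_def le_supI1)
lemma pos_id: "0 \<le> (x::'a::banach_lattice) \<Longrightarrow> pos x = x" by (simp add: pos_def sup_absorb1)
lemma labs_id: "0 \<le> (x::'a::banach_lattice) \<Longrightarrow> labs x = x"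
  unfolding labs_def by (rule sup_absorb1) (meson dual_order.trans neg_le_0_iff_le)
lemma labs_labs: "labs (labs (x::'a::banach_lattice)) = labs x" by (simp add: labs_id labs_nonneg)
lemma labs_neg: "labs (- (x::'a::banach_lattice)) = labs x" by (simp add: labs_def sup_commute)
lemma labs_0: "labs (0::'a::banach_lattice) = 0" by (simp add: labs_id)
lemma labs_ge: "(x::'a::banach_lattice) \<le> labs x" "- x \<le> labs x" by (auto simp: labs_def)
lemma labs_leI: "(x::'a::banach_lattice) \<le> u \<Longrightarrow> - x \<le> u \<Longrightarrow> labs x \<le> u" by (simp add: labs_def)
lemma labs_triangle: "labs ((x::'a::banach_lattice) + y) \<le> labs x + labs y"
proof (rule labs_leI)
  show "x + y \<le> labs x + labs y" by (intro add_mono labs_ge)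
  have "- x + - y \<le> labs x + labs y" by (intro add_mono labs_ge)
  then show "- (x + y) \<le> labs x + labs y" by simp
qed
lemma labs_le_iff: "labs (y::'a::banach_lattice) \<le> labs z \<longleftrightarrow> - labs z \<le> y \<and> y \<le> labs z"
proof
  assume "labs y \<le> labs z"
  then show "- labs z \<le> y \<and> y \<le> labs z" using labs_ge[of y]
    by (meson minus_le_iff order_trans)
next
  assume "- labs z \<le> y \<and> y \<le> labs z"
  then show "labs y \<le> labs z" by (intro labs_leI) (auto simp: minus_le_iff)
qed

lemma norm_labs: "norm (labs (x::'a::banach_lattice)) = norm x"
  by (metis antisym labs_def labs_labs lattice_norm order_refl)
lemma norm_mono_labs: "labs (x::'a::banach_lattice) \<le> labs y \<Longrightarrow> norm x \<le> norm y"
  by (simp add: labs_def lattice_norm)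
lemma norm_mono_pos: "0 \<le> (x::'a::banach_lattice) \<Longrightarrow> x \<le> y \<Longrightarrow> norm x \<le> norm y"
  by (metis labs_id norm_mono_labs order.trans)

lemma inf_add_le: 
  fixes a b c :: "'a::banach_lattice"
  assumes "0 \<le> a" "0 \<le> b" "0 \<le> c"
  shows "inf (a + b) c \<le> inf a c + inf b c"
proof -
  have "inf a c + inf b c = inf (inf (a + b) (c + b)) (inf (a + c) (c + c))"
    by (simp add: add_inf_distrib_left add_inf_distrib_right)
  moreover have "inf (a + b) c \<le> a + c" using assms
    by (meson add_increasing inf.coboundedI2 order_refl)
  moreover have "inf (a + b) c \<le> c + b" using assms
    by (meson add_increasing2 inf.coboundedI2 order_refl)
  moreover have "inf (a + b) c \<le> c + c" using assms
    by (meson add_increasing2 inf.coboundedI2 order_refl)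
  ultimately show ?thesis by (simp add: le_infI1 le_infI2)
qed

lemma diff_inf_le:
  fixes u v w :: "'a::banach_lattice"
  assumes "u \<le> v + w" "0 \<le> w"
  shows "u - inf u v \<le> w" "0 \<le> u - inf u v"
proof -
  have "u - inf u v = sup 0 (u - v)"
    by (simp add: diff_inf_eq_sup add_sup_distrib_left)
  then show "u - inf u v \<le> w" using assms
    by (simp add: add.commute diff_le_eq)
  show "0 \<le> u - inf u v" using inf.cobounded1[of u v] by (simp only: diff_ge_0_iff_ge)
qed

lemma pos_add_le: "pos ((v::'a::banach_lattice) + w) \<le> pos v + pos w"
  unfolding pos_def by (auto intro: add_mono simp: le_supI1 add_nonneg_nonneg)

lemma scaleR_sup: "0 \<le> t \<Longrightarrow> t *\<^sub>R sup a b = sup (t *\<^sub>R a) (t *\<^sub>R (b::'a::banach_lattice))"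
proof (cases "t = 0")
  case False
  assume t: "0 \<le> t"
  then have tp: "0 < t" using False by simp
  show ?thesis
  proof (rule antisym)
    have "a \<le> inverse t *\<^sub>R sup (t *\<^sub>R a) (t *\<^sub>R b)"
      using scaleR_left_mono[OF sup.cobounded1[of "t *\<^sub>R a" "t *\<^sub>R b"], of "inverse t"] tp by simp
    moreover have "b \<le> inverse t *\<^sub>R sup (t *\<^sub>R a) (t *\<^sub>R b)"
      using scaleR_left_mono[OF sup.cobounded2[of "t *\<^sub>R b" "t *\<^sub>R a"], of "inverse t"] tp by simp
    ultimately have "sup a b \<le> inverse t *\<^sub>R sup (t *\<^sub>R a) (t *\<^sub>R b)" by simp
    from scaleR_left_mono[OF this t] tp show "t *\<^sub>R sup a b \<le> sup (t *\<^sub>R a) (t *\<^sub>R b)" by simp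
    show "sup (t *\<^sub>R a) (t *\<^sub>R b) \<le> t *\<^sub>R sup a b"
      using t by (simp add: scaleR_left_mono)
  qed
qed simp

lemma scaleR_inf: "0 \<le> t \<Longrightarrow> t *\<^sub>R inf a b = inf (t *\<^sub>R a) (t *\<^sub>R (b::'a::banach_lattice))"
proof -
  assume t: "0 \<le> t"
  have "t *\<^sub>R inf a b = - (t *\<^sub>R sup (-a) (-b))" by (simp only: inf_eq_neg_sup[of a b] scaleR_minus_right)
  also have "\<dots> = - sup (t *\<^sub>R (-a)) (t *\<^sub>R (-b))" by (simp only: scaleR_sup[OF t])
  also have "\<dots> = inf (t *\<^sub>R a) (t *\<^sub>R b)" by (simp only: inf_eq_neg_sup[of "t *\<^sub>R a"] scaleR_minus_right)
  finally show ?thesis .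
qed

lemma labs_scaleR: "labs (t *\<^sub>R (x::'a::banach_lattice)) = \<bar>t\<bar> *\<^sub>R labs x"
proof (cases "0 \<le> t")
  case True then show ?thesis by (simp add: labs_def scaleR_sup)
next
  case False
  have "(-t) *\<^sub>R labs x = sup ((-t) *\<^sub>R x) ((-t) *\<^sub>R (-x))"
    unfolding labs_def using False by (intro scaleR_sup) simp
  also have "\<dots> = labs (t *\<^sub>R x)" by (simp add: labs_def sup_commute)
  finally show ?thesis using False by simp
qed

lemma pos_scaleR: "0 \<le> t \<Longrightarrow> pos (t *\<^sub>R (x::'a::banach_lattice)) = t *\<^sub>R pos x"
  by (simp add: pos_def scaleR_sup)

lemma disj_mono: "inf a b = (0::'a::banach_lattice) \<Longrightarrow> 0 \<le> a' \<Longrightarrow> a' \<le> a \<Longrightarrow> 0 \<le> b' \<Longrightarrow> b' \<le> b \<Longrightarrow> inf a' b' = 0"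
  by (metis antisym inf_mono le_inf_iff)

lemma disj_scale: 
  fixes a b :: "'a::banach_lattice"
  assumes "inf a b = 0" "0 \<le> a" "0 \<le> b" "0 \<le> r" "0 \<le> s"
  shows "inf (r *\<^sub>R a) (s *\<^sub>R b) = 0"
proof -
  let ?k = "max r s"
  have k1: "inf (?k *\<^sub>R a) (?k *\<^sub>R b) = 0" using assms by (simp add: scaleR_inf[symmetric])
  have k2: "r *\<^sub>R a \<le> ?k *\<^sub>R a" "s *\<^sub>R b \<le> ?k *\<^sub>R b"
    using assms by (auto intro: scaleR_right_mono)
  have k3: "0 \<le> r *\<^sub>R a" "0 \<le> s *\<^sub>R b" using assms by (simp_all add: scaleR_nonneg_nonneg)
  show ?thesis by (rule disj_mono[OF k1 k3(1) k2(1) k3(2) k2(2)])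
qed



definition sublin :: "('a::real_vector \<Rightarrow> real) \<Rightarrow> bool" where
  "sublin p \<longleftrightarrow> (\<forall>x y. p (x + y) \<le> p x + p y) \<and> (\<forall>t x. 0 < t \<longrightarrow> p (t *\<^sub>R x) \<le> t * p x)"

lemma sublin_add: "sublin p \<Longrightarrow> p (x + y) \<le> p x + p y" by (simp add: sublin_def)
lemma sublin_scale: "sublin p \<Longrightarrow> 0 < t \<Longrightarrow> p (t *\<^sub>R x) \<le> t * p x" by (simp add: sublin_def)

lemma sublin_0: assumes "sublin p" shows "p 0 = 0"
proof -
  have "p 0 \<le> p 0 + p 0" using sublin_add[OF assms, of 0 0] by simp
  moreover have "p 0 \<le> (1/2) * p 0" using sublin_scale[OF assms, of "1/2" 0] by simp
  ultimately show ?thesis by linarith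
qed

lemma sublin_hom: assumes "sublin p" "0 \<le> t" shows "p (t *\<^sub>R x) = t * p x"
proof (cases "t = 0")
  case True then show ?thesis using sublin_0[OF assms(1)] by simp
next
  case False
  then have t: "0 < t" using assms by simp
  have "p x = p (inverse t *\<^sub>R (t *\<^sub>R x))" using t by simp
  also have "\<dots> \<le> inverse t * p (t *\<^sub>R x)" using t by (intro sublin_scale[OF assms(1)]) simp
  finally have "t * p x \<le> p (t *\<^sub>R x)" using t by (simp add: field_simps)
  with sublin_scale[OF assms(1) t, of x] show ?thesis by simp
qed

lemma sublin_neg: assumes "sublin p" shows "- p (- x) \<le> p x"
  using sublin_add[OF assms, of x "-x"] sublin_0[OF assms] by simp

definition rfun :: "('a::real_vector \<Rightarrow> real) \<Rightarrow> 'a \<Rightarrow> 'a \<Rightarrow> real" where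
  "rfun q y x = Inf ((\<lambda>t. q (x + t *\<^sub>R y) - t * q y) ` {0..})"

lemma rfun_lb: assumes "sublin q" "0 \<le> t" shows "- q (- x) \<le> q (x + t *\<^sub>R y) - t * q y"
proof -
  have "q (t *\<^sub>R y) \<le> q (x + t *\<^sub>R y) + q (- x)"
    using sublin_add[OF assms(1), of "x + t *\<^sub>R y" "- x"] by simp
  then show ?thesis using sublin_hom[OF assms] by simp
qed

lemma rfun_bdd: assumes "sublin q" shows "bdd_below ((\<lambda>t. q (x + t *\<^sub>R y) - t * q y) ` {0..})"
  using rfun_lb[OF assms] by (intro bdd_belowI[of _ "- q (- x)"]) auto

lemma rfun_le: assumes "sublin q" "0 \<le> t" shows "rfun q y x \<le> q (x + t *\<^sub>R y) - t * q y"
  unfolding rfun_def using assms by (intro cInf_lower rfun_bdd) auto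

lemma rfun_ge: assumes "\<And>t. 0 \<le> t \<Longrightarrow> c \<le> q (x + t *\<^sub>R y) - t * q y" shows "c \<le> rfun q y x"
  unfolding rfun_def using assms by (intro cInf_greatest) auto

lemma rfun_below: assumes "sublin q" shows "rfun q y x \<le> q x"
  using rfun_le[OF assms, of 0 y x] by simp

lemma rfun_negy: assumes "sublin q" shows "rfun q y (- y) \<le> - q y"
  using rfun_le[OF assms, of 1 y "-y"] sublin_0[OF assms] by simp

lemma rfun_sublin: assumes q: "sublin q" shows "sublin (rfun q y)"
  unfolding sublin_def
proof (intro conjI allI impI)
  fix x1 x2
  have "rfun q y (x1 + x2) - (q (x2 + t2 *\<^sub>R y) - t2 * q y) \<le> rfun q y x1" if t2: "0 \<le> t2" for t2
  proof (rule rfun_ge)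
    fix t1 :: real assume t1: "0 \<le> t1"
    have "rfun q y (x1 + x2) \<le> q ((x1 + x2) + (t1 + t2) *\<^sub>R y) - (t1 + t2) * q y"
      using t1 t2 by (intro rfun_le[OF q]) simp
    also have "q ((x1 + x2) + (t1 + t2) *\<^sub>R y) = q ((x1 + t1 *\<^sub>R y) + (x2 + t2 *\<^sub>R y))"
      by (simp add: algebra_simps)
    also have "\<dots> \<le> q (x1 + t1 *\<^sub>R y) + q (x2 + t2 *\<^sub>R y)" by (rule sublin_add[OF q])
    finally show "rfun q y (x1 + x2) - (q (x2 + t2 *\<^sub>R y) - t2 * q y) \<le> q (x1 + t1 *\<^sub>R y) - t1 * q y"
      by (simp add: algebra_simps)
  qed
  then have "rfun q y (x1 + x2) - rfun q y x1 \<le> rfun q y x2"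
    by (intro rfun_ge) (simp add: algebra_simps)
  then show "rfun q y (x1 + x2) \<le> rfun q y x1 + rfun q y x2" by simp
next
  fix s :: real and x :: 'a assume s: "0 < s"
  have "rfun q y (s *\<^sub>R x) / s \<le> rfun q y x"
  proof (rule rfun_ge)
    fix t :: real assume t: "0 \<le> t"
    have "rfun q y (s *\<^sub>R x) \<le> q (s *\<^sub>R x + (s * t) *\<^sub>R y) - (s * t) * q y"
      using s t by (intro rfun_le[OF q]) simp
    also have "q (s *\<^sub>R x + (s * t) *\<^sub>R y) = s * q (x + t *\<^sub>R y)"
      using sublin_hom[OF q, of s "x + t *\<^sub>R y"] s by (simp add: scaleR_add_right)
    finally show "rfun q y (s *\<^sub>R x) / s \<le> q (x + t *\<^sub>R y) - t * q y"
      using s by (simp add: field_simps)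
  qed
  then show "rfun q y (s *\<^sub>R x) \<le> s * rfun q y x" using s by (simp add: field_simps)
qed

lemma HB_min:
  fixes p :: "'a::real_vector \<Rightarrow> real"
  assumes p: "sublin p"
  shows "\<exists>m. sublin m \<and> (\<forall>x. m x \<le> p x) \<and> (\<forall>q. sublin q \<and> (\<forall>x. q x \<le> m x) \<longrightarrow> q = m)"
proof -
  define A where "A = {q. sublin q \<and> (\<forall>x. q x \<le> p x)}"
  define P where "P = (\<lambda>q1 q2 :: 'a \<Rightarrow> real. \<forall>x. q2 x \<le> q1 x)"
  have po: "partial_order_on A (relation_of P A)"
  proof (rule partial_order_on_relation_ofI)
    show "a = b" if "P a b" "P b a" for a b
      using that unfolding P_def by (intro ext) (meson antisym)
  qed (auto simp: P_def intro: order_trans)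
  have ch: "\<exists>u \<in> A. \<forall>a \<in> C. P a u" if C: "C \<in> Chains (relation_of P A)" for C
  proof (cases "C = {}")
    case True then show ?thesis using p by (auto simp: A_def)
  next
    case False
    have CA: "C \<subseteq> A" using C False unfolding Chains_def relation_of_def by auto
    have comp: "P a b \<or> P b a" if "a \<in> C" "b \<in> C" for a b
      using C that unfolding Chains_def relation_of_def by auto
    define i where "i = (\<lambda>x. Inf ((\<lambda>q. q x) ` C))"
    have bdd: "bdd_below ((\<lambda>q. q x) ` C)" for x
    proof (rule bdd_belowI[of _ "- p (- x)"])
      fix v assume "v \<in> (\<lambda>q. q x) ` C"
      then obtain q where q: "q \<in> C" "v = q x" by auto
      then have "sublin q" "q (- x) \<le> p (- x)" using CA by (auto simp: A_def)
      then show "- p (- x) \<le> v" using sublin_neg[of q x] q by simp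
    qed
    have ile: "i x \<le> q x" if "q \<in> C" for q x
      unfolding i_def using that bdd by (intro cInf_lower) auto
    have ige: "c \<le> i x" if "\<And>q. q \<in> C \<Longrightarrow> c \<le> q x" for c x
      unfolding i_def using that False by (intro cInf_greatest) auto
    have "sublin i"
      unfolding sublin_def
    proof (intro conjI allI impI)
      fix x y
      have "i (x + y) - q2 y \<le> i x" if q2: "q2 \<in> C" for q2
      proof (rule ige)
        fix q1 assume q1: "q1 \<in> C"
        have s1: "sublin q1" and s2: "sublin q2" using q1 q2 CA by (auto simp: A_def)
        show "i (x + y) - q2 y \<le> q1 x"
        proof (cases "P q1 q2")
          case True
          have "i (x + y) \<le> q2 (x + y)" by (rule ile[OF q2])
          also have "\<dots> \<le> q2 x + q2 y" by (rule sublin_add[OF s2])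
          finally show ?thesis using True by (simp add: P_def) (smt (verit))
        next
          case False
          then have "P q2 q1" using comp[OF q1 q2] by auto
          have "i (x + y) \<le> q1 (x + y)" by (rule ile[OF q1])
          also have "\<dots> \<le> q1 x + q1 y" by (rule sublin_add[OF s1])
          finally show ?thesis using \<open>P q2 q1\<close> by (simp add: P_def) (smt (verit))
        qed
      qed
      then have "i (x + y) - i x \<le> i y" by (intro ige) (simp add: algebra_simps)
      then show "i (x + y) \<le> i x + i y" by simp
    next
      fix t :: real and x assume t: "0 < t"
      have "i (t *\<^sub>R x) / t \<le> i x"
      proof (rule ige)
        fix q assume q: "q \<in> C"
        then have "sublin q" using CA by (auto simp: A_def)
        have "i (t *\<^sub>R x) \<le> q (t *\<^sub>R x)" by (rule ile[OF q])
        also have "\<dots> \<le> t * q x" by (rule sublin_scale[OF \<open>sublin q\<close> t])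
        finally show "i (t *\<^sub>R x) / t \<le> q x" using t by (simp add: field_simps)
      qed
      then show "i (t *\<^sub>R x) \<le> t * i x" using t by (simp add: field_simps)
    qed
    moreover obtain q0 where "q0 \<in> C" using False by auto
    then have "i x \<le> p x" for x using ile[of q0 x] CA by (auto simp: A_def intro: order_trans)
    ultimately have "i \<in> A" by (simp add: A_def)
    moreover have "\<forall>a \<in> C. P a i" using ile by (simp add: P_def)
    ultimately show ?thesis by blast
  qed
  obtain m where m: "m \<in> A" "\<forall>a \<in> A. P m a \<longrightarrow> a = m"
    using predicate_Zorn[OF po ch] by blast
  show ?thesis
  proof (intro exI conjI allI impI)
    show "sublin m" "m x \<le> p x" for x using m by (auto simp: A_def)
    fix q assume q: "sublin q \<and> (\<forall>x. q x \<le> m x)"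
    then have "q \<in> A" using m by (auto simp: A_def intro: order_trans)
    then show "q = m" using m q by (simp add: P_def)
  qed
qed

lemma min_sublin_linear:
  fixes m :: "'a::real_vector \<Rightarrow> real"
  assumes sm: "sublin m" and min: "\<forall>q. sublin q \<and> (\<forall>x. q x \<le> m x) \<longrightarrow> q = m"
  shows "linear m"
proof -
  have neg: "m (- y) = - m y" for y
  proof -
    have "rfun m y = m" using min rfun_sublin[OF sm] rfun_below[OF sm] by blast
    then have "m (- y) \<le> - m y" using rfun_negy[OF sm, of y] by simp
    moreover have "- m y \<le> m (- y)" using sublin_neg[OF sm, of "- y"] by simp
    ultimately show ?thesis by simp
  qed
  have add: "m (x + y) = m x + m y" for x y
  proof -
    have "m x = m ((x + y) + (- y))" by simp
    also have "\<dots> \<le> m (x + y) + m (- y)" by (rule sublin_add[OF sm])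
    finally have "m x + m y \<le> m (x + y)" using neg[of y] by simp
    with sublin_add[OF sm, of x y] show ?thesis by simp
  qed
  have sc: "m (c *\<^sub>R x) = c * m x" for c x
  proof (cases "0 \<le> c")
    case True then show ?thesis by (rule sublin_hom[OF sm])
  next
    case False
    have "m (c *\<^sub>R x) = m (- ((- c) *\<^sub>R x))" by simp
    also have "\<dots> = - m ((- c) *\<^sub>R x)" by (rule neg)
    also have "\<dots> = c * m x" using sublin_hom[OF sm, of "- c" x] False by simp
    finally show ?thesis .
  qed
  show ?thesis by (rule linearI) (simp_all add: add sc)
qed

theorem HB:
  fixes p :: "'a::real_vector \<Rightarrow> real"
  assumes p: "sublin p"
  shows "\<exists>f. linear f \<and> (\<forall>x. f x \<le> p x) \<and> f c = p c"
proof -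
  define p0 where "p0 = rfun p c"
  have s0: "sublin p0" unfolding p0_def by (rule rfun_sublin[OF p])
  obtain m where m: "sublin m" "\<forall>x. m x \<le> p0 x" "\<forall>q. sublin q \<and> (\<forall>x. q x \<le> m x) \<longrightarrow> q = m"
    using HB_min[OF s0] by blast
  have lin: "linear m" by (rule min_sublin_linear) (use m in auto)
  have le: "m x \<le> p x" for x using m(2) rfun_below[OF p, of c x] unfolding p0_def by (meson order_trans)
  have "m (- c) \<le> - p c" using m(2) rfun_negy[OF p, of c] unfolding p0_def by (meson order_trans)
  moreover have "m (- c) = - m c" using linear_neg[OF lin] by simp
  ultimately have "p c \<le> m c" by simp
  with le[of c] have "m c = p c" by simp
  with lin le show ?thesis by blast
qed



definition aelem :: "'a::banach_lattice \<Rightarrow> bool" where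
  "aelem z \<longleftrightarrow> (\<forall>x. (\<forall>n. labs (x n) \<le> labs z) \<and> disjoint_seq x \<longrightarrow> (\<lambda>n. norm (x n)) \<longlonglongrightarrow> 0)"

lemma aelemD: "aelem z \<Longrightarrow> (\<And>n. labs (x n) \<le> labs z) \<Longrightarrow> disjoint_seq x \<Longrightarrow> (\<lambda>n. norm (x n)) \<longlonglongrightarrow> 0"
  by (auto simp: aelem_def)

lemma sol_single: "y \<in> sol {z} \<longleftrightarrow> labs y \<le> labs (z::'a::banach_lattice)"
  by (simp add: sol_def labs_le_iff)

lemma Lwc_single: "Lwc_set {z} \<longleftrightarrow> aelem (z::'a::banach_lattice)"
  by (simp add: Lwc_set_def aelem_def sol_single)

lemma aelem_solid: "aelem z \<Longrightarrow> labs y \<le> labs z \<Longrightarrow> aelem (y::'a::banach_lattice)"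
  unfolding aelem_def by (meson order_trans)

lemma labs_le_0: "labs (x::'a::banach_lattice) \<le> 0 \<Longrightarrow> x = 0"
  by (metis antisym labs_nonneg labs_0 norm_labs norm_eq_zero)

lemma aelem_0: "aelem (0::'a::banach_lattice)"
  unfolding aelem_def labs_0
proof (intro allI impI)
  fix x :: "nat \<Rightarrow> 'a" assume "(\<forall>n. labs (x n) \<le> 0) \<and> disjoint_seq x"
  then have "\<forall>n. x n = 0" using labs_le_0 by blast
  then show "(\<lambda>n. norm (x n)) \<longlonglongrightarrow> 0" by simp
qed

lemma dec:
  fixes x :: "nat \<Rightarrow> 'a::banach_lattice"
  assumes dx: "disjoint_seq x" and le: "\<And>n. labs (x n) \<le> labs y + w n" and w: "\<And>n. 0 \<le> w n"
  shows "\<exists>u v. disjoint_seq u \<and> disjoint_seq v \<and> (\<forall>n. labs (u n) \<le> labs y) \<and>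
     (\<forall>n. 0 \<le> v n \<and> v n \<le> w n) \<and> (\<forall>n. norm (x n) \<le> norm (u n) + norm (v n))"
proof -
  define u where "u n = inf (labs (x n)) (labs y)" for n
  define v where "v n = labs (x n) - u n" for n
  have u0: "0 \<le> u n" for n unfolding u_def by (simp add: labs_nonneg)
  have ux: "u n \<le> labs (x n)" for n unfolding u_def by simp
  have v0: "0 \<le> v n" and vw: "v n \<le> w n" for n
    unfolding v_def u_def using diff_inf_le[OF le w, of n] by blast+
  have vx: "v n \<le> labs (x n)" for n unfolding v_def using u0[of n] by simp
  have "disjoint_seq u"
    unfolding disjoint_seq_def
  proof (intro allI impI)
    fix n m :: nat assume "n \<noteq> m"
    then have "inf (labs (x n)) (labs (x m)) = 0" using dx by (simp add: disjoint_seq_def)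
    then have "inf (u n) (u m) = 0" by (rule disj_mono[OF _ u0 ux u0 ux])
    then show "inf (labs (u n)) (labs (u m)) = 0" using u0 by (simp add: labs_id)
  qed
  moreover have "disjoint_seq v"
    unfolding disjoint_seq_def
  proof (intro allI impI)
    fix n m :: nat assume "n \<noteq> m"
    then have "inf (labs (x n)) (labs (x m)) = 0" using dx by (simp add: disjoint_seq_def)
    then have "inf (v n) (v m) = 0" by (rule disj_mono[OF _ v0 vx v0 vx])
    then show "inf (labs (v n)) (labs (v m)) = 0" using v0 by (simp add: labs_id)
  qed
  moreover have "labs (u n) \<le> labs y" for n using u0 by (simp add: labs_id u_def)
  moreover have "norm (x n) \<le> norm (u n) + norm (v n)" for n
  proof -
    have "norm (x n) = norm (u n + v n)" by (simp add: v_def norm_labs)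
    also have "\<dots> \<le> norm (u n) + norm (v n)" by (rule norm_triangle_ineq)
    finally show ?thesis .
  qed
  ultimately show ?thesis using v0 vw by (intro exI[of _ u] exI[of _ v]) simp
qed

lemma null_sum:
  fixes f g h :: "nat \<Rightarrow> real"
  assumes "\<And>n. f n \<le> g n + h n" "\<And>n. 0 \<le> f n" "g \<longlonglongrightarrow> 0" "h \<longlonglongrightarrow> 0"
  shows "f \<longlonglongrightarrow> 0"
proof (rule Lim_null_comparison[of _ "\<lambda>n. g n + h n"])
  show "\<forall>\<^sub>F n in sequentially. norm (f n) \<le> g n + h n" using assms(1,2) by simp
  show "(\<lambda>n. g n + h n) \<longlonglongrightarrow> 0" using tendsto_add[OF assms(3,4)] by simp
qed

lemma aelem_add: 
  assumes "aelem y" "aelem (z::'a::banach_lattice)" shows "aelem (y + z)"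
  unfolding aelem_def
proof (intro allI impI, elim conjE)
  fix x :: "nat \<Rightarrow> 'a" assume le: "\<forall>n. labs (x n) \<le> labs (y + z)" and dx: "disjoint_seq x"
  have "labs (x n) \<le> labs y + labs z" for n using le labs_triangle[of y z] by (meson order_trans)
  from dec[OF dx this labs_nonneg] obtain u v where uv: "disjoint_seq u" "disjoint_seq v" "\<forall>n. labs (u n) \<le> labs y"
     "\<forall>n. 0 \<le> v n \<and> v n \<le> labs z" "\<forall>n. norm (x n) \<le> norm (u n) + norm (v n)"
    by blast
  have 1: "(\<lambda>n. norm (u n)) \<longlonglongrightarrow> 0" using uv(3) by (intro aelemD[OF assms(1) _ uv(1)]) simp
  have 2: "(\<lambda>n. norm (v n)) \<longlonglongrightarrow> 0" using uv(4) by (intro aelemD[OF assms(2) _ uv(2)]) (simp add: labs_id)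
  show "(\<lambda>n. norm (x n)) \<longlonglongrightarrow> 0"
    by (rule null_sum[OF _ _ 1 2]) (use uv(5) in auto)
qed

lemma aelem_nat: "aelem z \<Longrightarrow> aelem (real k *\<^sub>R (z::'a::banach_lattice))"
proof (induction k)
  case 0 then show ?case by (simp add: aelem_0)
next
  case (Suc k)
  then have "aelem (z + real k *\<^sub>R z)" by (intro aelem_add)
  then show ?case by (simp add: algebra_simps)
qed

lemma aelem_scale: assumes "aelem (z::'a::banach_lattice)" shows "aelem (c *\<^sub>R z)"
proof -
  obtain k :: nat where k: "\<bar>c\<bar> \<le> real k" using real_arch_simple by blast
  have "labs (c *\<^sub>R z) = \<bar>c\<bar> *\<^sub>R labs z" by (rule labs_scaleR)
  also have "\<dots> \<le> real k *\<^sub>R labs z" using k labs_nonneg by (intro scaleR_right_mono) auto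
  also have "\<dots> = labs (real k *\<^sub>R z)" by (simp add: labs_scaleR)
  finally show ?thesis using aelem_nat[OF assms, of k] aelem_solid by blast
qed

lemma aelem_neg: "aelem (z::'a::banach_lattice) \<Longrightarrow> aelem (- z)"
  using aelem_scale[of z "-1"] by simp

lemma aelem_diff: "aelem (y::'a::banach_lattice) \<Longrightarrow> aelem z \<Longrightarrow> aelem (y - z)"
  using aelem_add[of y "- z"] aelem_neg[of z] by (metis diff_conv_add_uminus)

lemma aelem_closed:
  assumes az: "\<And>k. aelem (z k)" and lim: "z \<longlonglongrightarrow> (l::'a::banach_lattice)"
  shows "aelem l"
  unfolding aelem_def
proof (intro allI impI, elim conjE)
  fix x :: "nat \<Rightarrow> 'a" assume le: "\<forall>n. labs (x n) \<le> labs l" and dx: "disjoint_seq x"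
  show "(\<lambda>n. norm (x n)) \<longlonglongrightarrow> 0"
  proof (rule LIMSEQ_I)
    fix r :: real assume r: "0 < r"
    obtain k where k: "norm (z k - l) < r / 2" using LIMSEQ_D[OF lim, of "r/2"] r by auto
    have "labs l \<le> labs (z k) + labs (l - z k)" using labs_triangle[of "z k" "l - z k"] by simp
    then have "labs (x n) \<le> labs (z k) + labs (l - z k)" for n using le by (meson order_trans)
    from dec[OF dx this labs_nonneg] obtain u v where uv: "disjoint_seq u" "\<forall>n. labs (u n) \<le> labs (z k)"
       "\<forall>n. 0 \<le> v n \<and> v n \<le> labs (l - z k)" "\<forall>n. norm (x n) \<le> norm (u n) + norm (v n)"
      by blast
    have "(\<lambda>n. norm (u n)) \<longlonglongrightarrow> 0" using uv(2) by (intro aelemD[OF az[of k] _ uv(1)]) simp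
    then obtain N where N: "\<forall>n\<ge>N. norm (norm (u n) - 0) < r / 2"
      using LIMSEQ_D[of "\<lambda>n. norm (u n)" 0 "r/2"] r by auto
    have "norm (norm (x n) - 0) < r" if "n \<ge> N" for n
    proof -
      have "norm (v n) \<le> norm (labs (l - z k))" using uv(3) by (intro norm_mono_pos) auto
      also have "\<dots> = norm (z k - l)" by (simp add: norm_labs norm_minus_commute)
      finally have "norm (v n) < r / 2" using k by simp
      moreover have "norm (u n) < r / 2" using N that by simp
      moreover have "norm (x n) \<le> norm (u n) + norm (v n)" using uv(4) by blast
      ultimately have "norm (x n) < r" by linarith
      then show ?thesis by simp
    qed
    then show "\<exists>N. \<forall>n\<ge>N. norm (norm (x n) - 0) < r" by blast
  qed
qed



definition G :: "'a::banach_lattice \<Rightarrow> 'a \<Rightarrow> real" where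
  "G e z = Sup ((\<lambda>r. norm (inf z (r *\<^sub>R e))) ` {0..})"


lemma G_bdd: assumes "0 \<le> z" "0 \<le> (e::'a::banach_lattice)"
  shows "bdd_above ((\<lambda>r. norm (inf z (r *\<^sub>R e))) ` {0..})"
proof (rule bdd_aboveI[of _ "norm z"])
  fix v assume "v \<in> (\<lambda>r. norm (inf z (r *\<^sub>R e))) ` {0..}"
  then obtain r where r: "0 \<le> r" "v = norm (inf z (r *\<^sub>R e))" by auto
  have "0 \<le> inf z (r *\<^sub>R e)" using assms r by (simp add: scaleR_nonneg_nonneg)
  then show "v \<le> norm z" using r by (simp add: norm_mono_pos)
qed

lemma G_upper: "0 \<le> z \<Longrightarrow> 0 \<le> e \<Longrightarrow> 0 \<le> r \<Longrightarrow> norm (inf z (r *\<^sub>R e)) \<le> G e (z::'a::banach_lattice)"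
  unfolding G_def using G_bdd[of z e] by (intro cSup_upper) auto

lemma G_least: "(\<And>r. 0 \<le> r \<Longrightarrow> norm (inf z (r *\<^sub>R e)) \<le> c) \<Longrightarrow> G e (z::'a::banach_lattice) \<le> c"
  unfolding G_def by (rule cSup_least) auto

lemma G_nonneg: "0 \<le> z \<Longrightarrow> 0 \<le> e \<Longrightarrow> 0 \<le> G e (z::'a::banach_lattice)"
  using G_upper[of z e 0] norm_ge_zero[of "inf z (0 *\<^sub>R e)"] by linarith

lemma G_mono: assumes "0 \<le> z1" "z1 \<le> z2" "0 \<le> e" shows "G e z1 \<le> G e (z2::'a::banach_lattice)"
proof (rule G_least)
  fix r :: real assume r: "0 \<le> r"
  have re: "0 \<le> r *\<^sub>R e" using assms r by (simp add: scaleR_nonneg_nonneg)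
  have "inf z1 (r *\<^sub>R e) \<le> inf z2 (r *\<^sub>R e)" using assms(2) by (rule inf_mono) simp
  moreover have "0 \<le> inf z1 (r *\<^sub>R e)" using assms(1) re by simp
  ultimately have "norm (inf z1 (r *\<^sub>R e)) \<le> norm (inf z2 (r *\<^sub>R e))"
    by (rule norm_mono_pos[rotated])
  also have "\<dots> \<le> G e z2" using assms r by (intro G_upper) auto
  finally show "norm (inf z1 (r *\<^sub>R e)) \<le> G e z2" .
qed

lemma G_le_norm: "0 \<le> z \<Longrightarrow> 0 \<le> e \<Longrightarrow> G e z \<le> norm (z::'a::banach_lattice)"
proof (rule G_least)
  fix r :: real assume "0 \<le> z" "0 \<le> e" "0 \<le> r"
  then have "0 \<le> inf z (r *\<^sub>R e)" by (simp add: scaleR_nonneg_nonneg)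
  then show "norm (inf z (r *\<^sub>R e)) \<le> norm z" by (rule norm_mono_pos) simp
qed

lemma G_sublin: assumes e: "0 \<le> (e::'a::banach_lattice)" shows "sublin (\<lambda>w. G e (pos w))"
  unfolding sublin_def
proof (intro conjI allI impI)
  fix v w :: 'a
  show "G e (pos (v + w)) \<le> G e (pos v) + G e (pos w)"
  proof (rule G_least)
    fix r :: real assume r: "0 \<le> r"
    have re: "0 \<le> r *\<^sub>R e" using r e by (simp add: scaleR_nonneg_nonneg)
    have "inf (pos (v + w)) (r *\<^sub>R e) \<le> inf (pos v + pos w) (r *\<^sub>R e)"
      using pos_add_le by (rule inf_mono) simp
    also have "\<dots> \<le> inf (pos v) (r *\<^sub>R e) + inf (pos w) (r *\<^sub>R e)"
      using re by (intro inf_add_le pos_nonneg)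
    finally have "norm (inf (pos (v + w)) (r *\<^sub>R e)) \<le> norm (inf (pos v) (r *\<^sub>R e) + inf (pos w) (r *\<^sub>R e))"
      using re pos_nonneg by (intro norm_mono_pos) auto
    also have "\<dots> \<le> norm (inf (pos v) (r *\<^sub>R e)) + norm (inf (pos w) (r *\<^sub>R e))" by (rule norm_triangle_ineq)
    also have "\<dots> \<le> G e (pos v) + G e (pos w)"
      using r e pos_nonneg by (intro add_mono G_upper) auto
    finally show "norm (inf (pos (v + w)) (r *\<^sub>R e)) \<le> G e (pos v) + G e (pos w)" .
  qed
next
  fix t :: real and x :: 'a assume t: "0 < t"
  show "G e (pos (t *\<^sub>R x)) \<le> t * G e (pos x)"
  proof (rule G_least)
    fix r :: real assume r: "0 \<le> r"
    have "inf (pos (t *\<^sub>R x)) (r *\<^sub>R e) = t *\<^sub>R inf (pos x) ((r / t) *\<^sub>R e)"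
      using t by (simp add: pos_scaleR scaleR_inf)
    then have "norm (inf (pos (t *\<^sub>R x)) (r *\<^sub>R e)) = t * norm (inf (pos x) ((r / t) *\<^sub>R e))"
      using t by simp
    also have "\<dots> \<le> t * G e (pos x)"
      using t r e pos_nonneg by (intro mult_left_mono G_upper) auto
    finally show "norm (inf (pos (t *\<^sub>R x)) (r *\<^sub>R e)) \<le> t * G e (pos x)" .
  qed
qed

lemma G_null:
  fixes e :: "nat \<Rightarrow> 'a::banach_lattice"
  assumes z: "aelem z" and e0: "\<And>n. 0 \<le> e n" and ed: "\<And>n m. n \<noteq> m \<Longrightarrow> inf (e n) (e m) = 0"
  shows "(\<lambda>n. G (e n) (labs z)) \<longlonglongrightarrow> 0"
proof -
  have "\<exists>r. 0 \<le> r \<and> G (e n) (labs z) \<le> 2 * norm (inf (labs z) (r *\<^sub>R e n))" for n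
  proof (cases "G (e n) (labs z) \<le> 0")
    case True
    have "0 \<le> norm (inf (labs z) ((0::real) *\<^sub>R e n))" by (rule norm_ge_zero)
    then show ?thesis using True by (intro exI[of _ 0] conjI) linarith+
  next
    case False
    then have "G (e n) (labs z) / 2 < Sup ((\<lambda>r. norm (inf (labs z) (r *\<^sub>R e n))) ` {0..})"
      by (simp add: G_def)
    from less_cSupD[OF _ this] obtain r where "0 \<le> r" "G (e n) (labs z) / 2 < norm (inf (labs z) (r *\<^sub>R e n))"
      by auto
    then show ?thesis by (intro exI[of _ r]) simp
  qed
  then have "\<exists>r. \<forall>n. 0 \<le> r n \<and> G (e n) (labs z) \<le> 2 * norm (inf (labs z) (r n *\<^sub>R e n))"
    by (rule choice[OF allI])
  then obtain r where r0: "\<forall>n. 0 \<le> r n \<and> G (e n) (labs z) \<le> 2 * norm (inf (labs z) (r n *\<^sub>R e n))"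
    by blast
  have r: "0 \<le> r n" "G (e n) (labs z) \<le> 2 * norm (inf (labs z) (r n *\<^sub>R e n))" for n
    using r0 by auto
  define w where "w n = inf (labs z) (r n *\<^sub>R e n)" for n
  have w0: "0 \<le> w n" for n unfolding w_def using r e0 by (simp add: scaleR_nonneg_nonneg labs_nonneg)
  have "disjoint_seq w"
    unfolding disjoint_seq_def
  proof (intro allI impI)
    fix n m :: nat assume "n \<noteq> m"
    then have "inf (r n *\<^sub>R e n) (r m *\<^sub>R e m) = 0" using ed e0 r by (intro disj_scale) auto
    then show "inf (labs (w n)) (labs (w m)) = 0"
      using w0 r e0 by (simp add: labs_id) (rule disj_mono, auto simp: w_def scaleR_nonneg_nonneg)
  qed
  moreover have "labs (w n) \<le> labs z" for n using w0 by (simp add: labs_id w_def)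
  ultimately have "(\<lambda>n. norm (w n)) \<longlonglongrightarrow> 0" using aelemD[OF z] by blast
  then have L: "(\<lambda>n. 2 * norm (w n)) \<longlonglongrightarrow> 0" using tendsto_mult_right_zero by blast
  have B: "\<forall>n. norm (G (e n) (labs z)) \<le> 2 * norm (w n)"
    using r(2) G_nonneg[OF labs_nonneg e0] by (simp add: w_def)
  show ?thesis by (rule Lim_null_comparison[OF always_eventually[OF B] L])
qed

lemma limited_single: "limited_set {y}"
  unfolding limited_set_def
proof (intro conjI allI impI)
  show "bounded {y}" by simp
  fix f :: "nat \<Rightarrow> 'a \<Rightarrow> real" and r :: real
  assume f: "(\<forall>n. bounded_linear (f n)) \<and> (\<forall>x. (\<lambda>n. f n x) \<longlonglongrightarrow> 0)" and r: "0 < r"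
  then obtain N where "\<forall>n\<ge>N. norm (f n y - 0) < r" using LIMSEQ_D by blast
  then show "\<exists>N. \<forall>n\<ge>N. \<forall>x\<in>{y}. \<bar>f n x\<bar> < r" by auto
qed

lemma lLwc_aelem: "limitedly_Lwc T \<Longrightarrow> aelem (T y)"
  using limited_single[of y] by (auto simp: limitedly_Lwc_def Lwc_single[symmetric])

lemma KL:
  fixes T :: "'a::banach_lattice \<Rightarrow> 'a"
  assumes T: "bounded_linear T" and Ta: "\<And>y. aelem (T y)"
  shows "limitedly_Lwc T"
proof -
  have "Lwc_set (T ` A)" if A: "limited_set A" for A
    unfolding Lwc_set_def
  proof (intro allI impI, elim conjE)
    fix x :: "nat \<Rightarrow> 'a" assume xs: "\<forall>n. x n \<in> sol (T ` A)" and dx: "disjoint_seq x"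
    have "\<forall>n. \<exists>a. a \<in> A \<and> labs (x n) \<le> labs (T a)"
    proof
      fix n
      have "x n \<in> (\<Union>c\<in>T ` A. {y. - labs c \<le> y \<and> y \<le> labs c})" using xs by (simp add: sol_def)
      then obtain a where "a \<in> A" "- labs (T a) \<le> x n \<and> x n \<le> labs (T a)" by blast
      then show "\<exists>a. a \<in> A \<and> labs (x n) \<le> labs (T a)" using labs_le_iff by blast
    qed
    from choice[OF this] obtain a where a0: "\<forall>n. a n \<in> A \<and> labs (x n) \<le> labs (T (a n))"
      by blast
    have a: "a n \<in> A" "labs (x n) \<le> labs (T (a n))" for n using a0 by auto
    define e where "e n = labs (x n)" for n
    have e0: "0 \<le> e n" for n by (simp add: e_def labs_nonneg)
    have ed: "inf (e n) (e m) = 0" if "n \<noteq> m" for n m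
      using dx that by (simp add: e_def disjoint_seq_def)
    define c where "c n = T (a n)" for n
    define s where "s n = (if norm (inf (pos (- c n)) (e n)) \<le> norm (inf (pos (c n)) (e n)) then 1 else (-1::real))" for n
    have s1: "\<bar>s n\<bar> = 1" for n by (simp add: s_def)
    have low: "norm (x n) \<le> 2 * G (e n) (pos (s n *\<^sub>R c n))" for n
    proof -
      have "e n \<le> labs (c n)" using a(2) by (simp add: e_def c_def)
      then have "e n = inf (labs (c n)) (e n)" by (simp add: inf_absorb2)
      also have "\<dots> \<le> inf (pos (c n)) (e n) + inf (pos (- c n)) (e n)"
        unfolding labs_pos_neg using e0 pos_nonneg by (intro inf_add_le)
      finally have "norm (e n) \<le> norm (inf (pos (c n)) (e n) + inf (pos (- c n)) (e n))"
        using e0 by (intro norm_mono_pos) auto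
      also have "\<dots> \<le> norm (inf (pos (c n)) (e n)) + norm (inf (pos (- c n)) (e n))"
        by (rule norm_triangle_ineq)
      finally have 1: "norm (x n) \<le> norm (inf (pos (c n)) (e n)) + norm (inf (pos (- c n)) (e n))"
        by (simp add: e_def norm_labs)
      have 2: "norm (inf (pos y) (e n)) \<le> G (e n) (pos y)" for y
        using G_upper[of "pos y" "e n" 1, OF pos_nonneg e0] by simp
      show ?thesis
      proof (cases "norm (inf (pos (- c n)) (e n)) \<le> norm (inf (pos (c n)) (e n))")
        case True
        then have "s n = 1" by (simp add: s_def)
        then show ?thesis using 1 2[of "c n"] True by simp
      next
        case False
        then have "s n = -1" by (simp add: s_def)
        then show ?thesis using 1 2[of "- c n"] False by simp
      qed
    qed
    have "\<forall>n. \<exists>f. linear f \<and> (\<forall>w. f w \<le> G (e n) (pos w)) \<and> f (s n *\<^sub>R c n) = G (e n) (pos (s n *\<^sub>R c n))"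
    proof
      fix n show "\<exists>f. linear f \<and> (\<forall>w. f w \<le> G (e n) (pos w)) \<and> f (s n *\<^sub>R c n) = G (e n) (pos (s n *\<^sub>R c n))"
        by (rule HB[OF G_sublin[OF e0]])
    qed
    from choice[OF this] obtain \<psi> where \<psi>0: "\<forall>n. linear (\<psi> n) \<and> (\<forall>w. \<psi> n w \<le> G (e n) (pos w)) \<and>
        \<psi> n (s n *\<^sub>R c n) = G (e n) (pos (s n *\<^sub>R c n))"
      by blast
    have \<psi>: "linear (\<psi> n)" "\<psi> n w \<le> G (e n) (pos w)"
        "\<psi> n (s n *\<^sub>R c n) = G (e n) (pos (s n *\<^sub>R c n))" for n w
      using \<psi>0 by auto
    have \<psi>abs: "\<bar>\<psi> n w\<bar> \<le> G (e n) (labs w)" for n w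
    proof -
      have "\<psi> n w \<le> G (e n) (labs w)"
        using \<psi>(2)[where n=n and w=w] G_mono[OF pos_nonneg[of w] pos_le_labs[of w] e0[of n]] by simp
      moreover have "- \<psi> n w \<le> G (e n) (labs w)"
        using \<psi>(2)[where n=n and w="- w"] G_mono[OF pos_nonneg[of "- w"] pos_le_labs[of "- w"] e0[of n]]
          linear_neg[OF \<psi>(1)[of n], of w] by (simp add: labs_neg)
      ultimately show ?thesis by simp
    qed
    have \<psi>bl: "bounded_linear (\<psi> n)" for n
    proof (rule bounded_linear_intro[where K=1])
      show "\<psi> n (v + w) = \<psi> n v + \<psi> n w" for v w by (rule linear_add[OF \<psi>(1)])
      show "\<psi> n (r *\<^sub>R v) = r *\<^sub>R \<psi> n v" for r v by (rule linear_scale[OF \<psi>(1)])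
      show "norm (\<psi> n v) \<le> norm v * 1" for v
        using \<psi>abs[where n=n and w=v] G_le_norm[OF labs_nonneg[of v] e0[of n]] by (simp add: norm_labs)
    qed
    define h where "h n = (\<lambda>v. s n * \<psi> n (T v))" for n
    have hbl: "bounded_linear (h n)" for n
      unfolding h_def using bounded_linear_compose[OF \<psi>bl T] by (rule bounded_linear_const_mult)
    have hnull: "(\<lambda>n. h n v) \<longlonglongrightarrow> 0" for v
    proof (rule Lim_null_comparison[of _ "\<lambda>n. G (e n) (labs (T v))"])
      show "\<forall>\<^sub>F n in sequentially. norm (h n v) \<le> G (e n) (labs (T v))"
        using \<psi>abs s1 by (simp add: h_def abs_mult)
      show "(\<lambda>n. G (e n) (labs (T v))) \<longlonglongrightarrow> 0" by (rule G_null[where z="T v" and e=e]) (simp_all add: Ta e0 ed)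
    qed
    have hlow: "norm (x n) \<le> 2 * \<bar>h n (a n)\<bar>" for n
    proof -
      have "h n (a n) = \<psi> n (s n *\<^sub>R c n)"
        using linear_scale[OF \<psi>(1)[of n], of "s n" "c n"] by (simp add: h_def c_def)
      then show ?thesis using low[of n] \<psi>(3)[of n] by simp
    qed
    from A have "\<forall>f :: nat \<Rightarrow> 'a \<Rightarrow> real. (\<forall>n. bounded_linear (f n)) \<and> (\<forall>x. (\<lambda>n. f n x) \<longlonglongrightarrow> 0) \<longrightarrow>
        (\<forall>e>0. \<exists>N. \<forall>n\<ge>N. \<forall>x\<in>A. \<bar>f n x\<bar> < e)" by (simp add: limited_set_def)
    then have "(\<forall>n. bounded_linear (h n)) \<and> (\<forall>x. (\<lambda>n. h n x) \<longlonglongrightarrow> 0) \<longrightarrow>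
        (\<forall>e>0. \<exists>N. \<forall>n\<ge>N. \<forall>x\<in>A. \<bar>h n x\<bar> < e)" by (rule spec)
    then have lim: "\<forall>r>0. \<exists>N. \<forall>n\<ge>N. \<forall>x\<in>A. \<bar>h n x\<bar> < r"
      using hbl hnull by blast
    show "(\<lambda>n. norm (x n)) \<longlonglongrightarrow> 0"
    proof (rule LIMSEQ_I)
      fix r :: real assume r: "0 < r"
      then obtain N where N: "\<forall>n\<ge>N. \<forall>x\<in>A. \<bar>h n x\<bar> < r / 2" using lim by (meson half_gt_zero)
      have "norm (norm (x n) - 0) < r" if "n \<ge> N" for n
      proof -
        have "\<bar>h n (a n)\<bar> < r / 2" using N that a(1)[of n] by blast
        then show ?thesis using hlow[of n] by simp
      qed
      then show "\<exists>no. \<forall>n\<ge>no. norm (norm (x n) - 0) < r" by blast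
    qed
  qed
  then show ?thesis using T by (simp add: limitedly_Lwc_def)
qed

lemma lLwc_iff: "limitedly_Lwc T \<longleftrightarrow> bounded_linear T \<and> (\<forall>y. aelem (T (y::'a::banach_lattice)))"
  using KL lLwc_aelem by (auto simp: limitedly_Lwc_def)



lemma bl_diff: "bounded_linear T \<Longrightarrow> T (x - y) = T x - T y"
  using linear_diff[OF bounded_linear.linear] by blast
lemma bl_add: "bounded_linear T \<Longrightarrow> T (x + y) = T x + T y"
  using linear_add[OF bounded_linear.linear] by blast
lemma bl_scale: "bounded_linear T \<Longrightarrow> T (c *\<^sub>R x) = c *\<^sub>R T x"
  using linear_scale[OF bounded_linear.linear] by blast
lemma bl_neg: "bounded_linear T \<Longrightarrow> T (- x) = - T x"
  using linear_neg[OF bounded_linear.linear] by blast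
lemma bl_zero: "bounded_linear T \<Longrightarrow> T 0 = 0"
  using linear_0[OF bounded_linear.linear] by blast

lemma pos_opD: "pos_op T \<Longrightarrow> bounded_linear T" "pos_op T \<Longrightarrow> 0 \<le> x \<Longrightarrow> 0 \<le> T x"
  by (auto simp: pos_op_def)

lemma pos_op_mono: "pos_op T \<Longrightarrow> x \<le> y \<Longrightarrow> T x \<le> T (y::'a::banach_lattice)"
proof -
  assume T: "pos_op T" and xy: "x \<le> y"
  have "0 \<le> T (y - x)" using pos_opD(2)[OF T] xy by simp
  then show ?thesis using bl_diff[OF pos_opD(1)[OF T], of y x] by simp
qed

definition good :: "('a::banach_lattice \<Rightarrow> 'a) \<Rightarrow> bool" where
  "good T \<longleftrightarrow> pos_op T \<and> (\<forall>y. aelem (T y))"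

lemma good_iff: "pos_op T \<and> limitedly_Lwc T \<longleftrightarrow> good T"
  by (auto simp: good_def lLwc_iff pos_op_def)

lemma rlLwc_char: "T \<in> rlLwc_ops \<longleftrightarrow> (\<exists>T1 T2. good T1 \<and> good T2 \<and> T = (\<lambda>x. T1 x - T2 x))"
  unfolding rlLwc_ops_def using good_iff by blast

lemma good_zero: "good (\<lambda>x. 0::'a::banach_lattice)"
  by (simp add: good_def pos_op_def aelem_0 bounded_linear_zero)

lemma good_add: "good S \<Longrightarrow> good T \<Longrightarrow> good (\<lambda>x. S x + T x)"
  by (simp add: good_def pos_op_def aelem_add bounded_linear_add)

lemma good_scale: assumes "good T" "0 \<le> c" shows "good (\<lambda>x. c *\<^sub>R T x)"
  using assms unfolding good_def pos_op_def
  by (auto simp: aelem_scale scaleR_nonneg_nonneg intro: bounded_linear_compose[OF bounded_linear_scaleR_right])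

lemma good_comp: "good S \<Longrightarrow> good T \<Longrightarrow> good (\<lambda>x. S (T x))"
  by (simp add: good_def pos_op_def bounded_linear_compose)

lemma good_dom: assumes "pos_op T" "\<And>y. 0 \<le> y \<Longrightarrow> aelem (T y)" shows "good T"
proof -
  have "aelem (T y)" for y
  proof -
    have "T y = T (pos y) - T (pos (- y))"
      using bl_diff[OF pos_opD(1)[OF assms(1)]] pos_minus_neg[of y] by metis
    then show ?thesis using assms(2) pos_nonneg aelem_diff by metis
  qed
  then show ?thesis using assms(1) by (simp add: good_def)
qed

lemma reg_bl: "T \<in> regular_ops \<Longrightarrow> bounded_linear T"
  by (auto simp: regular_ops_def pos_op_def intro: bounded_linear_sub)

lemma rl_sub_reg: "rlLwc_ops \<subseteq> regular_ops"
  by (auto simp: rlLwc_ops_def regular_ops_def)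

lemma eq_on_pos:
  fixes M N :: "'a::banach_lattice \<Rightarrow> 'a"
  assumes "bounded_linear M" "bounded_linear N" "\<And>x. 0 \<le> x \<Longrightarrow> M x = N x"
  shows "M = N"
proof
  fix x
  have "M x = M (pos x) - M (pos (- x))"
    using bl_diff[OF assms(1)] pos_minus_neg[of x] by metis
  also have "\<dots> = N (pos x) - N (pos (- x))" using assms(3)[OF pos_nonneg] by simp
  also have "\<dots> = N x" using bl_diff[OF assms(2)] pos_minus_neg[of x] by metis
  finally show "M x = N x" .
qed

lemma op_le_antisym:
  assumes "M \<in> regular_ops" "N \<in> regular_ops" "op_le M N" "op_le N M" shows "M = N"
proof (rule eq_on_pos[OF reg_bl[OF assms(1)] reg_bl[OF assms(2)]])
  fix x :: 'a assume "0 \<le> x"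
  then show "M x = N x" using assms(3,4) unfolding op_le_def pos_op_def
    by (metis antisym diff_ge_0_iff_ge)
qed



lemma modulus_exists:
  fixes S :: "'a::banach_lattice \<Rightarrow> 'a"
  assumes dc: "dedekind_complete TYPE('a)" and Sreg: "S \<in> regular_ops"
  shows "\<exists>M. M \<in> regular_ops \<and> op_le S M \<and> op_le (\<lambda>x. - S x) M \<and>
     (\<forall>N\<in>regular_ops. op_le S N \<and> op_le (\<lambda>x. - S x) N \<longrightarrow> op_le M N)"
proof -
  obtain S1 S2 where S1: "pos_op S1" and S2: "pos_op S2" and Sdef: "S = (\<lambda>x. S1 x - S2 x)"
    using Sreg by (auto simp: regular_ops_def)
  have Sbl: "bounded_linear S" using reg_bl[OF Sreg] .
  define R where "R x = S1 x + S2 x" for x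
  have Rpos: "pos_op R" unfolding R_def pos_op_def using S1 S2
    by (auto simp: pos_op_def intro: bounded_linear_add)
  have Sle: "S u \<le> R x" if "0 \<le> u" "u \<le> x" for u x
  proof -
    have "S u \<le> S1 u" using pos_opD(2)[OF S2 that(1)] by (simp add: Sdef)
    also have "\<dots> \<le> S1 x" using pos_op_mono[OF S1 that(2)] .
    also have "\<dots> \<le> R x" using pos_opD(2)[OF S2, of x] that by (simp add: R_def)
    finally show ?thesis .
  qed
  define LUB where "LUB x s \<longleftrightarrow> (\<forall>u. 0 \<le> u \<and> u \<le> x \<longrightarrow> S u \<le> s) \<and>
      (\<forall>b. (\<forall>u. 0 \<le> u \<and> u \<le> x \<longrightarrow> S u \<le> b) \<longrightarrow> s \<le> b)" for x s
  have lubex: "\<exists>s. LUB x s" if x: "0 \<le> x" for x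
  proof -
    let ?A = "S ` {u. 0 \<le> u \<and> u \<le> x}"
    have "?A \<noteq> {}" using x by auto
    moreover have "bdd_above ?A" using Sle by (intro bdd_aboveI[of _ "R x"]) auto
    moreover have "?A \<noteq> {} \<and> bdd_above ?A \<longrightarrow>
        (\<exists>s. (\<forall>a\<in>?A. a \<le> s) \<and> (\<forall>b. (\<forall>a\<in>?A. a \<le> b) \<longrightarrow> s \<le> b))"
      using dc unfolding dedekind_complete_def by (rule spec)
    ultimately obtain s where s: "\<forall>a\<in>?A. a \<le> s" "\<forall>b. (\<forall>a\<in>?A. a \<le> b) \<longrightarrow> s \<le> b"
      by blast
    then show ?thesis unfolding LUB_def by (intro exI[of _ s]) auto
  qed
  define P0 where "P0 x = (SOME s. LUB x s)" for x
  have P0L: "LUB x (P0 x)" if "0 \<le> x" for x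
    unfolding P0_def using someI_ex[OF lubex[OF that]] .
  have P0u: "S u \<le> P0 x" if "0 \<le> u" "u \<le> x" for u x
  proof -
    have "0 \<le> x" using that by (rule order_trans)
    then show ?thesis using P0L[of x] that unfolding LUB_def by blast
  qed
  have P0l: "P0 x \<le> b" if "0 \<le> x" "\<And>u. 0 \<le> u \<Longrightarrow> u \<le> x \<Longrightarrow> S u \<le> b" for x b
    using P0L[OF that(1)] that(2) unfolding LUB_def by blast
  have S0: "S 0 = 0" by (rule bl_zero[OF Sbl])
  have P0_nonneg: "0 \<le> P0 x" if "0 \<le> x" for x using P0u[of 0 x] that S0 by simp
  have P0_0: "P0 0 = 0"
  proof (rule antisym)
    show "P0 0 \<le> 0" by (rule P0l) (auto simp: S0 dest: antisym)
    show "0 \<le> P0 0" by (rule P0_nonneg) simp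
  qed
  have P0_geS: "S x \<le> P0 x" if "0 \<le> x" for x using P0u[of x x] that by simp
  have P0_leR: "P0 x \<le> R x" if "0 \<le> x" for x using P0l[OF that, of "R x"] Sle by blast
  have P0_add: "P0 (x + y) = P0 x + P0 y" if x: "0 \<le> x" and y: "0 \<le> y" for x y
  proof (rule antisym)
    have xy: "0 \<le> x + y" using x y by simp
    show "P0 (x + y) \<le> P0 x + P0 y"
    proof (rule P0l[OF xy])
      fix w assume w: "0 \<le> w" "w \<le> x + y"
      have "S w = S (inf w x + (w - inf w x))" by (metis add.commute diff_add_cancel)
      also have "\<dots> = S (inf w x) + S (w - inf w x)" by (rule bl_add[OF Sbl])
      also have "\<dots> \<le> P0 x + P0 y"
      proof (rule add_mono)
        show "S (inf w x) \<le> P0 x" using w x by (intro P0u) auto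
        show "S (w - inf w x) \<le> P0 y" using diff_inf_le[OF w(2) y] by (intro P0u) auto
      qed
      finally show "S w \<le> P0 x + P0 y" .
    qed
    have 1: "P0 x \<le> P0 (x + y) - S v" if v: "0 \<le> v" "v \<le> y" for v
    proof (rule P0l[OF x])
      fix u assume u: "0 \<le> u" "u \<le> x"
      have "S u + S v = S (u + v)" using bl_add[OF Sbl] by simp
      also have "\<dots> \<le> P0 (x + y)" using u v by (intro P0u) (auto intro: add_mono)
      finally show "S u \<le> P0 (x + y) - S v" by (simp add: algebra_simps)
    qed
    have "P0 y \<le> P0 (x + y) - P0 x"
    proof (rule P0l[OF y])
      fix v assume "0 \<le> v" "v \<le> y"
      from 1[OF this] show "S v \<le> P0 (x + y) - P0 x" by (simp add: algebra_simps)
    qed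
    then show "P0 x + P0 y \<le> P0 (x + y)" by (simp add: algebra_simps)
  qed
  have P0_scale: "P0 (t *\<^sub>R x) = t *\<^sub>R P0 x" if x: "0 \<le> x" and t: "0 \<le> t" for x t
  proof (cases "t = 0")
    case True then show ?thesis using P0_0 by simp
  next
    case False
    then have tp: "0 < t" using t by simp
    have tx: "0 \<le> t *\<^sub>R x" using x t by (simp add: scaleR_nonneg_nonneg)
    show ?thesis
    proof (rule antisym)
      show "P0 (t *\<^sub>R x) \<le> t *\<^sub>R P0 x"
      proof (rule P0l[OF tx])
        fix u assume u: "0 \<le> u" "u \<le> t *\<^sub>R x"
        have "inverse t *\<^sub>R u \<le> inverse t *\<^sub>R (t *\<^sub>R x)" using u tp by (intro scaleR_left_mono) auto
        then have u1: "inverse t *\<^sub>R u \<le> x" using tp by simp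
        have u0: "0 \<le> inverse t *\<^sub>R u" using u tp by (simp add: scaleR_nonneg_nonneg)
        have "S u = t *\<^sub>R S (inverse t *\<^sub>R u)" using bl_scale[OF Sbl, of "inverse t" u] tp by simp
        also have "\<dots> \<le> t *\<^sub>R P0 x" using P0u[OF u0 u1] t by (intro scaleR_left_mono)
        finally show "S u \<le> t *\<^sub>R P0 x" .
      qed
      have "P0 x \<le> inverse t *\<^sub>R P0 (t *\<^sub>R x)"
      proof (rule P0l[OF x])
        fix u assume u: "0 \<le> u" "u \<le> x"
        have "S (t *\<^sub>R u) \<le> P0 (t *\<^sub>R x)" using u t
          by (intro P0u) (auto simp: scaleR_nonneg_nonneg intro: scaleR_left_mono)
        then have "inverse t *\<^sub>R S (t *\<^sub>R u) \<le> inverse t *\<^sub>R P0 (t *\<^sub>R x)" using tp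
          by (intro scaleR_left_mono) auto
        then show "S u \<le> inverse t *\<^sub>R P0 (t *\<^sub>R x)" using bl_scale[OF Sbl, of t u] tp by simp
      qed
      then have "t *\<^sub>R P0 x \<le> t *\<^sub>R (inverse t *\<^sub>R P0 (t *\<^sub>R x))" using t by (intro scaleR_left_mono)
      then show "t *\<^sub>R P0 x \<le> P0 (t *\<^sub>R x)" using tp by simp
    qed
  qed
  define P where "P x = P0 (pos x) - P0 (pos (- x))" for x
  have P_diff: "P (a - b) = P0 a - P0 b" if a: "0 \<le> a" and b: "0 \<le> b" for a b
  proof -
    let ?d = "a - b"
    have "pos ?d - pos (- ?d) = a - b" by (rule pos_minus_neg)
    then have "a + pos (- ?d) = b + pos ?d" by (simp add: algebra_simps)
    then have "P0 (a + pos (- ?d)) = P0 (b + pos ?d)" by simp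
    moreover have "P0 (a + pos (- ?d)) = P0 a + P0 (pos (- ?d))" by (rule P0_add[OF a pos_nonneg])
    moreover have "P0 (b + pos ?d) = P0 b + P0 (pos ?d)" by (rule P0_add[OF b pos_nonneg])
    ultimately have "P0 a + P0 (pos (- ?d)) = P0 b + P0 (pos ?d)" by simp
    then show ?thesis unfolding P_def by (simp add: algebra_simps)
  qed
  have P_pos: "P x = P0 x" if "0 \<le> x" for x using P_diff[OF that order_refl] P0_0 by simp
  have P_add: "P (x + y) = P x + P y" for x y
  proof -
    have "x + y = (pos x + pos y) - (pos (- x) + pos (- y))"
      using pos_minus_neg[of x] pos_minus_neg[of y] by (simp add: algebra_simps)
    then have "P (x + y) = P0 (pos x + pos y) - P0 (pos (- x) + pos (- y))"
      using P_diff pos_nonneg by (metis add_nonneg_nonneg)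
    also have "\<dots> = P x + P y" using P0_add[OF pos_nonneg pos_nonneg, of x y] P0_add[OF pos_nonneg pos_nonneg, of "- x" "- y"]
      by (simp add: P_def algebra_simps)
    finally show ?thesis .
  qed
  have P_scale: "P (t *\<^sub>R x) = t *\<^sub>R P x" for t x
  proof (cases "0 \<le> t")
    case True
    have "t *\<^sub>R x = t *\<^sub>R pos x - t *\<^sub>R pos (- x)"
      using pos_minus_neg[of x] by (metis scaleR_diff_right)
    then have "P (t *\<^sub>R x) = P0 (t *\<^sub>R pos x) - P0 (t *\<^sub>R pos (- x))"
      using P_diff True pos_nonneg by (metis scaleR_nonneg_nonneg)
    also have "\<dots> = t *\<^sub>R P x" using P0_scale[OF pos_nonneg True, of x] P0_scale[OF pos_nonneg True, of "- x"]
      by (simp add: P_def scaleR_diff_right)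
    finally show ?thesis .
  next
    case False
    then have nt: "0 \<le> - t" by simp
    have "t *\<^sub>R x = (- t) *\<^sub>R pos (- x) - (- t) *\<^sub>R pos x"
      using pos_minus_neg[of x] by (metis minus_diff_eq scaleR_diff_right scaleR_minus_left)
    then have "P (t *\<^sub>R x) = P0 ((- t) *\<^sub>R pos (- x)) - P0 ((- t) *\<^sub>R pos x)"
      using P_diff nt pos_nonneg by (metis scaleR_nonneg_nonneg)
    also have "\<dots> = t *\<^sub>R P x" using P0_scale[OF pos_nonneg nt] by (simp add: P_def algebra_simps)
    finally show ?thesis .
  qed
  obtain K where K: "\<And>x. norm (R x) \<le> norm x * K"
    using bounded_linear.bounded[OF pos_opD(1)[OF Rpos]] by blast
  have Pbl: "bounded_linear P"
  proof (rule bounded_linear_intro[OF P_add P_scale])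
    fix x
    have "labs (P x) \<le> labs (P0 (pos x)) + labs (- P0 (pos (- x)))"
      unfolding P_def using labs_triangle by (metis diff_conv_add_uminus)
    also have "\<dots> = P0 (pos x) + P0 (pos (- x))"
      by (simp add: labs_neg labs_id P0_nonneg pos_nonneg)
    also have "\<dots> \<le> R (pos x) + R (pos (- x))" using P0_leR pos_nonneg by (intro add_mono) auto
    also have "\<dots> = R (labs x)" using bl_add[OF pos_opD(1)[OF Rpos]] by (simp add: labs_pos_neg)
    also have "\<dots> = labs (R (labs x))" using pos_opD(2)[OF Rpos labs_nonneg] by (simp add: labs_id)
    finally have "norm (P x) \<le> norm (R (labs x))" by (rule norm_mono_labs)
    also have "\<dots> \<le> norm x * K" using K[of "labs x"] by (simp add: norm_labs)
    finally show "norm (P x) \<le> norm x * K" .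
  qed
  define M where "M x = 2 *\<^sub>R P x - S x" for x
  have Mbl: "bounded_linear M" unfolding M_def
    by (intro bounded_linear_sub Sbl bounded_linear_compose[OF bounded_linear_scaleR_right Pbl])
  have Mreg: "M \<in> regular_ops"
  proof -
    have "pos_op (\<lambda>x. 2 *\<^sub>R P x + S2 x)"
      unfolding pos_op_def
    proof (intro conjI allI impI)
      show "bounded_linear (\<lambda>x. 2 *\<^sub>R P x + S2 x)"
        by (intro bounded_linear_add pos_opD(1)[OF S2] bounded_linear_compose[OF bounded_linear_scaleR_right Pbl])
      fix x :: 'a assume "0 \<le> x"
      then show "0 \<le> 2 *\<^sub>R P x + S2 x" using P_pos P0_nonneg pos_opD(2)[OF S2]
        by (simp add: scaleR_nonneg_nonneg)
    qed
    moreover have "M = (\<lambda>x. (2 *\<^sub>R P x + S2 x) - S1 x)" by (auto simp: M_def Sdef)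
    ultimately show ?thesis using S1 unfolding regular_ops_def by blast
  qed
  have le1: "op_le S M"
    unfolding op_le_def pos_op_def
  proof (intro conjI allI impI)
    show "bounded_linear (\<lambda>x. M x - S x)" by (intro bounded_linear_sub Mbl Sbl)
    fix x :: 'a assume x: "0 \<le> x"
    have "M x - S x = 2 *\<^sub>R (P0 x - S x)" using P_pos[OF x] by (simp add: M_def scaleR_2 algebra_simps)
    then show "0 \<le> M x - S x" using P0_geS[OF x] by (simp add: scaleR_nonneg_nonneg)
  qed
  have le2: "op_le (\<lambda>x. - S x) M"
    unfolding op_le_def pos_op_def
  proof (intro conjI allI impI)
    show "bounded_linear (\<lambda>x. M x - - S x)" using Mbl Sbl by (simp add: bounded_linear_add)
    fix x :: 'a assume x: "0 \<le> x"
    have "M x - - S x = 2 *\<^sub>R P0 x" using P_pos[OF x] by (simp add: M_def)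
    then show "0 \<le> M x - - S x" using P0_nonneg[OF x] by (simp add: scaleR_nonneg_nonneg)
  qed
  have least: "op_le M N" if N: "N \<in> regular_ops" "op_le S N" "op_le (\<lambda>x. - S x) N" for N
    unfolding op_le_def pos_op_def
  proof (intro conjI allI impI)
    have Nbl: "bounded_linear N" by (rule reg_bl[OF N(1)])
    show "bounded_linear (\<lambda>x. N x - M x)" by (intro bounded_linear_sub Mbl Nbl)
    fix x :: 'a assume x: "0 \<le> x"
    have NS: "0 \<le> N y - S y" if "0 \<le> y" for y using N(2) that by (simp add: op_le_def pos_op_def)
    have NS2: "0 \<le> N y + S y" if "0 \<le> y" for y using N(3) that by (simp add: op_le_def pos_op_def)
    have "P0 x \<le> (1/2) *\<^sub>R (N x + S x)"
    proof (rule P0l[OF x])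
      fix u assume u: "0 \<le> u" "u \<le> x"
      have "0 \<le> (N u - S u) + (N (x - u) + S (x - u))"
        using NS[OF u(1)] NS2[of "x - u"] u by simp
      also have "\<dots> = N x + S x - (S u + S u)" using bl_diff[OF Nbl] bl_diff[OF Sbl] by (simp add: algebra_simps)
      finally have "S u + S u \<le> N x + S x" by simp
      then have "(1/2) *\<^sub>R (S u + S u) \<le> (1/2) *\<^sub>R (N x + S x)" by (intro scaleR_left_mono) auto
      then show "S u \<le> (1/2) *\<^sub>R (N x + S x)" by (simp add: scaleR_2[symmetric])
    qed
    then have "2 *\<^sub>R P0 x \<le> 2 *\<^sub>R ((1/2) *\<^sub>R (N x + S x))" by (intro scaleR_left_mono) auto
    then have "2 *\<^sub>R P0 x \<le> N x + S x" by simp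
    then show "0 \<le> N x - M x" using P_pos[OF x] by (simp add: M_def algebra_simps)
  qed
  show ?thesis using Mreg le1 le2 least by blast
qed

lemma op_abs_spec:
  fixes S :: "'a::banach_lattice \<Rightarrow> 'a"
  assumes dc: "dedekind_complete TYPE('a)" and Sreg: "S \<in> regular_ops"
  shows "op_abs S \<in> regular_ops \<and> op_le S (op_abs S) \<and> op_le (\<lambda>x. - S x) (op_abs S) \<and>
     (\<forall>N\<in>regular_ops. op_le S N \<and> op_le (\<lambda>x. - S x) N \<longrightarrow> op_le (op_abs S) N)"
proof -
  obtain M where M: "M \<in> regular_ops \<and> op_le S M \<and> op_le (\<lambda>x. - S x) M \<and>
     (\<forall>N\<in>regular_ops. op_le S N \<and> op_le (\<lambda>x. - S x) N \<longrightarrow> op_le M N)"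
    using modulus_exists[OF dc Sreg] by blast
  show ?thesis unfolding op_abs_def
  proof (rule theI[where a=M])
    show "M \<in> regular_ops \<and> op_le S M \<and> op_le (\<lambda>x. - S x) M \<and>
     (\<forall>N\<in>regular_ops. op_le S N \<and> op_le (\<lambda>x. - S x) N \<longrightarrow> op_le M N)" by (rule M)
    fix M' assume M': "M' \<in> regular_ops \<and> op_le S M' \<and> op_le (\<lambda>x. - S x) M' \<and>
     (\<forall>N\<in>regular_ops. op_le S N \<and> op_le (\<lambda>x. - S x) N \<longrightarrow> op_le M' N)"
    then have "op_le M' M" "op_le M M'" using M by blast+
    then show "M' = M" using op_le_antisym M M' by blast
  qed
qed



lemma good_bl: "good T \<Longrightarrow> bounded_linear T" by (simp add: good_def pos_op_def)
lemma good_pos: "good T \<Longrightarrow> 0 \<le> x \<Longrightarrow> 0 \<le> T x" by (simp add: good_def pos_op_def)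
lemma good_ae: "good T \<Longrightarrow> aelem (T x)" by (simp add: good_def)

lemma pos_op_zero: "pos_op (\<lambda>x. 0::'a::banach_lattice)" by (simp add: pos_op_def bounded_linear_zero)

lemma rl_zero: "(\<lambda>x. 0::'a::banach_lattice) \<in> rlLwc_ops"
  unfolding rlLwc_char using good_zero by fastforce

lemma rl_add: assumes "S \<in> rlLwc_ops" "T \<in> rlLwc_ops" shows "(\<lambda>x. S x + T x) \<in> rlLwc_ops"
proof -
  obtain S1 S2 where S: "good S1" "good S2" "S = (\<lambda>x. S1 x - S2 x)" using assms(1) rlLwc_char by blast
  obtain T1 T2 where T: "good T1" "good T2" "T = (\<lambda>x. T1 x - T2 x)" using assms(2) rlLwc_char by blast
  have "(\<lambda>x. S x + T x) = (\<lambda>x. (S1 x + T1 x) - (S2 x + T2 x))" by (auto simp: S T algebra_simps)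
  moreover have "good (\<lambda>x. S1 x + T1 x)" "good (\<lambda>x. S2 x + T2 x)" using S T by (auto intro: good_add)
  ultimately show ?thesis unfolding rlLwc_char by blast
qed

lemma rl_scale: assumes "T \<in> rlLwc_ops" shows "(\<lambda>x. c *\<^sub>R T x) \<in> rlLwc_ops"
proof -
  obtain T1 T2 where T: "good T1" "good T2" "T = (\<lambda>x. T1 x - T2 x)" using assms rlLwc_char by blast
  show ?thesis
  proof (cases "0 \<le> c")
    case True
    have "(\<lambda>x. c *\<^sub>R T x) = (\<lambda>x. c *\<^sub>R T1 x - c *\<^sub>R T2 x)" by (auto simp: T scaleR_diff_right)
    moreover have "good (\<lambda>x. c *\<^sub>R T1 x)" "good (\<lambda>x. c *\<^sub>R T2 x)" using T True by (auto intro: good_scale)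
    ultimately show ?thesis unfolding rlLwc_char by blast
  next
    case False
    have "(\<lambda>x. c *\<^sub>R T x) = (\<lambda>x. (- c) *\<^sub>R T2 x - (- c) *\<^sub>R T1 x)" by (auto simp: T algebra_simps)
    moreover have "good (\<lambda>x. (- c) *\<^sub>R T1 x)" by (rule good_scale[OF T(1)]) (use False in simp)
    moreover have "good (\<lambda>x. (- c) *\<^sub>R T2 x)" by (rule good_scale[OF T(2)]) (use False in simp)
    ultimately show ?thesis unfolding rlLwc_char by blast
  qed
qed

lemma rl_comp: assumes "S \<in> rlLwc_ops" "T \<in> rlLwc_ops" shows "S \<circ> T \<in> rlLwc_ops"
proof -
  obtain S1 S2 where S: "good S1" "good S2" "S = (\<lambda>x. S1 x - S2 x)" using assms(1) rlLwc_char by blast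
  obtain T1 T2 where T: "good T1" "good T2" "T = (\<lambda>x. T1 x - T2 x)" using assms(2) rlLwc_char by blast
  have "S \<circ> T = (\<lambda>x. (S1 (T1 x) + S2 (T2 x)) - (S1 (T2 x) + S2 (T1 x)))"
    using bl_diff[OF good_bl[OF S(1)]] bl_diff[OF good_bl[OF S(2)]] by (auto simp: S T algebra_simps)
  moreover have "good (\<lambda>x. S1 (T1 x) + S2 (T2 x))"
    by (rule good_add[OF good_comp[OF S(1) T(1)] good_comp[OF S(2) T(2)]])
  moreover have "good (\<lambda>x. S1 (T2 x) + S2 (T1 x))"
    by (rule good_add[OF good_comp[OF S(1) T(2)] good_comp[OF S(2) T(1)]])
  ultimately show ?thesis unfolding rlLwc_char by blast
qed

lemma part1: "is_subalgebra (rlLwc_ops :: ('a::banach_lattice \<Rightarrow> 'a) set) regular_ops"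
  unfolding is_subalgebra_def
proof (intro conjI ballI allI)
  show "rlLwc_ops \<subseteq> (regular_ops :: ('a \<Rightarrow> 'a) set)" by (rule rl_sub_reg)
  show "(\<lambda>x. 0::'a) \<in> rlLwc_ops" by (rule rl_zero)
  show "(\<lambda>x. S x + T x) \<in> rlLwc_ops" if "S \<in> rlLwc_ops" "T \<in> rlLwc_ops" for S T :: "'a \<Rightarrow> 'a"
    using that by (rule rl_add)
  show "(\<lambda>x. c *\<^sub>R T x) \<in> rlLwc_ops" if "T \<in> rlLwc_ops" for c and T :: "'a \<Rightarrow> 'a"
    using that by (rule rl_scale)
  show "S \<circ> T \<in> rlLwc_ops" if "S \<in> rlLwc_ops" "T \<in> rlLwc_ops" for S T :: "'a \<Rightarrow> 'a"
    using that by (rule rl_comp)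
qed

lemma part1b: "(rlLwc_ops = (regular_ops :: ('a::banach_lattice \<Rightarrow> 'a) set)) \<longleftrightarrow> limitedly_Lwc (id :: 'a \<Rightarrow> 'a)"
proof
  assume eq: "rlLwc_ops = (regular_ops :: ('a \<Rightarrow> 'a) set)"
  have "pos_op (\<lambda>x::'a. x)" by (simp add: pos_op_def)
  then have "(\<lambda>x::'a. x) \<in> regular_ops" unfolding regular_ops_def using pos_op_zero
    by (intro CollectI exI[of _ "\<lambda>x. x"] exI[of _ "\<lambda>x. 0"]) auto
  then have "(\<lambda>x::'a. x) \<in> rlLwc_ops" using eq by simp
  then obtain T1 T2 where T: "good T1" "good T2" "(\<lambda>x::'a. x) = (\<lambda>x. T1 x - T2 x)"
    using rlLwc_char by blast
  have "aelem y" for y :: 'a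
  proof -
    have "y = T1 y - T2 y" using fun_cong[OF T(3), of y] by simp
    then show ?thesis using aelem_diff[OF good_ae[OF T(1)] good_ae[OF T(2)]] by metis
  qed
  then show "limitedly_Lwc (id :: 'a \<Rightarrow> 'a)" by (simp add: lLwc_iff id_def)
next
  assume "limitedly_Lwc (id :: 'a \<Rightarrow> 'a)"
  then have ae: "aelem y" for y :: 'a by (simp add: lLwc_iff)
  have "regular_ops \<subseteq> (rlLwc_ops :: ('a \<Rightarrow> 'a) set)"
  proof
    fix T :: "'a \<Rightarrow> 'a" assume "T \<in> regular_ops"
    then obtain T1 T2 where "pos_op T1" "pos_op T2" "T = (\<lambda>x. T1 x - T2 x)" by (auto simp: regular_ops_def)
    moreover have "good T1" "good T2" using calculation ae by (auto simp: good_def)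
    ultimately show "T \<in> rlLwc_ops" unfolding rlLwc_char by blast
  qed
  then show "rlLwc_ops = (regular_ops :: ('a \<Rightarrow> 'a) set)" using rl_sub_reg by blast
qed

lemma reg_add: assumes "S \<in> regular_ops" "T \<in> regular_ops" shows "(\<lambda>x. S x + T x) \<in> regular_ops"
proof -
  obtain S1 S2 where S: "pos_op S1" "pos_op S2" "S = (\<lambda>x. S1 x - S2 x)" using assms(1) by (auto simp: regular_ops_def)
  obtain T1 T2 where T: "pos_op T1" "pos_op T2" "T = (\<lambda>x. T1 x - T2 x)" using assms(2) by (auto simp: regular_ops_def)
  have "(\<lambda>x. S x + T x) = (\<lambda>x. (S1 x + T1 x) - (S2 x + T2 x))" by (auto simp: S T algebra_simps)
  moreover have "pos_op (\<lambda>x. S1 x + T1 x)" "pos_op (\<lambda>x. S2 x + T2 x)" using S T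
    by (auto simp: pos_op_def intro: bounded_linear_add)
  ultimately show ?thesis unfolding regular_ops_def by blast
qed

lemma reg_diff: assumes "S \<in> regular_ops" "T \<in> regular_ops" shows "(\<lambda>x. S x - T x) \<in> regular_ops"
proof -
  obtain S1 S2 where S: "pos_op S1" "pos_op S2" "S = (\<lambda>x. S1 x - S2 x)" using assms(1) by (auto simp: regular_ops_def)
  obtain T1 T2 where T: "pos_op T1" "pos_op T2" "T = (\<lambda>x. T1 x - T2 x)" using assms(2) by (auto simp: regular_ops_def)
  have "(\<lambda>x. S x - T x) = (\<lambda>x. (S1 x + T2 x) - (S2 x + T1 x))" by (auto simp: S T algebra_simps)
  moreover have "pos_op (\<lambda>x. S1 x + T2 x)" "pos_op (\<lambda>x. S2 x + T1 x)" using S T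
    by (auto simp: pos_op_def intro: bounded_linear_add)
  ultimately show ?thesis unfolding regular_ops_def by blast
qed

lemma op_leI: assumes "bounded_linear S" "bounded_linear T" "\<And>x. 0 \<le> x \<Longrightarrow> S x \<le> T x"
  shows "op_le S T"
  using assms by (simp add: op_le_def pos_op_def bounded_linear_sub)

lemma op_leD: "op_le S T \<Longrightarrow> 0 \<le> x \<Longrightarrow> S x \<le> T x"
  by (simp add: op_le_def pos_op_def)

lemma abs_facts:
  fixes R :: "'a::banach_lattice \<Rightarrow> 'a"
  assumes dc: "dedekind_complete TYPE('a)" and R: "R \<in> regular_ops"
  shows "op_abs R \<in> regular_ops" "bounded_linear (op_abs R)"
    "\<And>y. 0 \<le> y \<Longrightarrow> labs (R y) \<le> op_abs R y"
    "\<And>y. 0 \<le> y \<Longrightarrow> 0 \<le> op_abs R y"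
    "\<And>N y. N \<in> regular_ops \<Longrightarrow> (\<And>y. 0 \<le> y \<Longrightarrow> R y \<le> N y \<and> - R y \<le> N y) \<Longrightarrow> 0 \<le> y \<Longrightarrow> op_abs R y \<le> N y"
proof -
  note sp = op_abs_spec[OF dc R]
  show A: "op_abs R \<in> regular_ops" using sp by blast
  show B: "bounded_linear (op_abs R)" by (rule reg_bl[OF A])
  show C: "labs (R y) \<le> op_abs R y" if "0 \<le> y" for y
    using sp op_leD that by (intro labs_leI) blast+
  show "0 \<le> op_abs R y" if "0 \<le> y" for y by (rule order_trans[OF labs_nonneg C[OF that]])
  fix N :: "'a \<Rightarrow> 'a" and y :: 'a assume N: "N \<in> regular_ops" "\<And>y. 0 \<le> y \<Longrightarrow> R y \<le> N y \<and> - R y \<le> N y" and y: "0 \<le> y"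
  have Rbl: "bounded_linear R" by (rule reg_bl[OF R])
  have "op_le R N" "op_le (\<lambda>x. - R x) N"
    using N reg_bl[OF N(1)] Rbl by (auto intro!: op_leI bounded_linear_minus)
  then have "op_le (op_abs R) N" using sp N(1) by blast
  then show "op_abs R y \<le> N y" using op_leD y by blast
qed

lemma aelem_abs_rl:
  fixes T :: "'a::banach_lattice \<Rightarrow> 'a"
  assumes dc: "dedekind_complete TYPE('a)" and T: "T \<in> rlLwc_ops" and y: "0 \<le> y"
  shows "aelem (op_abs T y)"
proof -
  obtain T1 T2 where TT: "good T1" "good T2" "T = (\<lambda>x. T1 x - T2 x)" using T rlLwc_char by blast
  have Treg: "T \<in> regular_ops" using T rl_sub_reg by blast
  have Nreg: "(\<lambda>x. T1 x + T2 x) \<in> regular_ops"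
    using TT unfolding regular_ops_def good_def
    by (intro CollectI exI[of _ "\<lambda>x. T1 x + T2 x"] exI[of _ "\<lambda>x. 0"]) (auto simp: pos_op_zero pos_op_def intro: bounded_linear_add)
  have "op_abs T y \<le> T1 y + T2 y"
  proof (rule abs_facts(5)[OF dc Treg Nreg _ y])
    fix z :: 'a assume z: "0 \<le> z"
    show "T z \<le> T1 z + T2 z \<and> - T z \<le> T1 z + T2 z"
      using good_pos[OF TT(1) z] good_pos[OF TT(2) z] by (simp add: TT(3) minus_le_self_iff)
  qed
  moreover have "0 \<le> op_abs T y" by (rule abs_facts(4)[OF dc Treg y])
  ultimately have "labs (op_abs T y) \<le> labs (T1 y + T2 y)"
    using good_pos[OF TT(1) y] good_pos[OF TT(2) y] by (simp add: labs_id)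
  then show ?thesis using aelem_add[OF good_ae[OF TT(1)] good_ae[OF TT(2)]] aelem_solid by blast
qed

lemma rl_from_abs:
  fixes S :: "'a::banach_lattice \<Rightarrow> 'a"
  assumes dc: "dedekind_complete TYPE('a)" and S: "S \<in> regular_ops"
    and ae: "\<And>y. 0 \<le> y \<Longrightarrow> aelem (op_abs S y)"
  shows "S \<in> rlLwc_ops"
proof -
  let ?A = "op_abs S"
  have Abl: "bounded_linear ?A" by (rule abs_facts(2)[OF dc S])
  have Sbl: "bounded_linear S" by (rule reg_bl[OF S])
  have aS: "aelem (S y)" if "0 \<le> y" for y
  proof -
    have "labs (S y) \<le> labs (?A y)"
      using abs_facts(3,4)[OF dc S that] by (simp add: labs_id)
    then show ?thesis using ae[OF that] aelem_solid by blast
  qed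
  have g1: "good ?A"
    using Abl abs_facts(4)[OF dc S] ae by (intro good_dom) (auto simp: pos_op_def)
  have g2: "good (\<lambda>x. ?A x - S x)"
  proof (rule good_dom)
    show "pos_op (\<lambda>x. ?A x - S x)"
      unfolding pos_op_def
    proof (intro conjI allI impI)
      show "bounded_linear (\<lambda>x. ?A x - S x)" by (rule bounded_linear_sub[OF Abl Sbl])
      fix x :: 'a assume x: "0 \<le> x"
      have "S x \<le> ?A x" by (rule order_trans[OF labs_ge(1) abs_facts(3)[OF dc S x]])
      then show "0 \<le> ?A x - S x" by simp
    qed
    show "aelem (?A y - S y)" if "0 \<le> y" for y using ae[OF that] aS[OF that] by (rule aelem_diff)
  qed
  have "S = (\<lambda>x. ?A x - (?A x - S x))" by simp
  then show ?thesis unfolding rlLwc_char using g1 g2 by blast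
qed

lemma part2_ideal:
  fixes dummy :: "'a::banach_lattice"
  assumes dc: "dedekind_complete TYPE('a)"
  shows "is_order_ideal (rlLwc_ops :: ('a \<Rightarrow> 'a) set)"
  unfolding is_order_ideal_def
proof (intro conjI ballI impI allI)
  show "rlLwc_ops \<subseteq> (regular_ops :: ('a \<Rightarrow> 'a) set)" by (rule rl_sub_reg)
  show "(\<lambda>x. 0::'a) \<in> rlLwc_ops" by (rule rl_zero)
  show "(\<lambda>x. S x + T x) \<in> rlLwc_ops" if "S \<in> rlLwc_ops" "T \<in> rlLwc_ops" for S T :: "'a \<Rightarrow> 'a"
    using that by (rule rl_add)
  show "(\<lambda>x. c *\<^sub>R T x) \<in> rlLwc_ops" if "T \<in> rlLwc_ops" for c and T :: "'a \<Rightarrow> 'a"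
    using that by (rule rl_scale)
  fix S T :: "'a \<Rightarrow> 'a"
  assume S: "S \<in> regular_ops" and T: "T \<in> rlLwc_ops" and le: "op_le (op_abs S) (op_abs T)"
  have Treg: "T \<in> regular_ops" using T rl_sub_reg by blast
  show "S \<in> rlLwc_ops"
  proof (rule rl_from_abs[OF dc S])
    fix y :: 'a assume y: "0 \<le> y"
    have "op_abs S y \<le> op_abs T y" using op_leD[OF le y] .
    moreover have "0 \<le> op_abs S y" by (rule abs_facts(4)[OF dc S y])
    moreover have "0 \<le> op_abs T y" by (rule abs_facts(4)[OF dc Treg y])
    ultimately have "labs (op_abs S y) \<le> labs (op_abs T y)" by (simp add: labs_id)
    then show "aelem (op_abs S y)" using aelem_abs_rl[OF dc T y] aelem_solid by blast
  qed
qed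

lemma part2_closed:
  fixes dummy :: "'a::banach_lattice"
  assumes dc: "dedekind_complete TYPE('a)"
  shows "reg_closed (rlLwc_ops :: ('a \<Rightarrow> 'a) set)"
  unfolding reg_closed_def
proof (intro allI impI, elim conjE)
  fix T :: "nat \<Rightarrow> 'a \<Rightarrow> 'a" and S :: "'a \<Rightarrow> 'a"
  assume T: "\<forall>n. T n \<in> rlLwc_ops" and S: "S \<in> regular_ops"
    and lim: "(\<lambda>n. reg_norm (\<lambda>x. T n x - S x)) \<longlonglongrightarrow> 0"
  have Treg: "T n \<in> regular_ops" for n using T rl_sub_reg by blast
  define D where "D n = op_abs (\<lambda>x. T n x - S x)" for n
  have Dreg: "(\<lambda>x. T n x - S x) \<in> regular_ops" for n by (rule reg_diff[OF Treg S])
  have Dbl: "bounded_linear (D n)" for n unfolding D_def by (rule abs_facts(2)[OF dc Dreg])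
  have Dlim: "(\<lambda>n. onorm (D n)) \<longlonglongrightarrow> 0" using lim by (simp add: reg_norm_def D_def)
  have Dsmall: "(\<lambda>n. norm (D n y)) \<longlonglongrightarrow> 0" for y
  proof (rule Lim_null_comparison[OF always_eventually])
    show "\<forall>n. norm (norm (D n y)) \<le> onorm (D n) * norm y" using onorm[OF Dbl] by simp
    show "(\<lambda>n. onorm (D n) * norm y) \<longlonglongrightarrow> 0" using Dlim by (rule tendsto_mult_left_zero)
  qed
  show "S \<in> rlLwc_ops"
  proof (rule rl_from_abs[OF dc S])
    fix y :: 'a assume y: "0 \<le> y"
    let ?u = "op_abs S y"
    define w where "w n = inf ?u (op_abs (T n) y)" for n
    have u0: "0 \<le> ?u" by (rule abs_facts(4)[OF dc S y])
    have AT0: "0 \<le> op_abs (T n) y" for n by (rule abs_facts(4)[OF dc Treg y])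
    have wa: "aelem (w n)" for n
    proof -
      have "labs (w n) \<le> labs (op_abs (T n) y)" using u0 AT0 by (simp add: w_def labs_id)
      then show ?thesis using aelem_abs_rl[OF dc T[rule_format] y] aelem_solid by blast
    qed
    have ule: "?u \<le> op_abs (T n) y + D n y" for n
    proof (rule abs_facts(5)[OF dc S reg_add[OF abs_facts(1)[OF dc Treg] abs_facts(1)[OF dc Dreg]] _ y, folded D_def])
      fix z :: 'a assume z: "0 \<le> z"
      have a1: "labs (T n z) \<le> op_abs (T n) z" by (rule abs_facts(3)[OF dc Treg z])
      have a2: "labs (T n z - S z) \<le> D n z" unfolding D_def by (rule abs_facts(3)[OF dc Dreg z])
      have "S z = T n z - (T n z - S z)" by simp
      then have "labs (S z) \<le> labs (T n z) + labs (T n z - S z)"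
        using labs_triangle[of "T n z" "- (T n z - S z)"] labs_neg by (metis diff_conv_add_uminus)
      also have "\<dots> \<le> op_abs (T n) z + D n z" using a1 a2 by (rule add_mono)
      finally have "labs (S z) \<le> op_abs (T n) z + D n z" .
      then show "S z \<le> op_abs (T n) z + D n z \<and> - S z \<le> op_abs (T n) z + D n z"
        using order_trans[OF labs_ge(1)[of "S z"]] order_trans[OF labs_ge(2)[of "S z"]] by blast
    qed
    have D0: "0 \<le> D n y" for n unfolding D_def by (rule abs_facts(4)[OF dc Dreg y])
    have "(\<lambda>n. w n) \<longlonglongrightarrow> ?u"
    proof (rule Lim_transform[OF tendsto_const])
      show "(\<lambda>n. w n - ?u) \<longlonglongrightarrow> 0"
      proof (rule Lim_null_comparison[OF always_eventually Dsmall[of y]])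
        show "\<forall>n. norm (w n - ?u) \<le> norm (D n y)"
        proof
          fix n
          have "?u - w n \<le> D n y" "0 \<le> ?u - w n" unfolding w_def using diff_inf_le[OF ule D0] by auto
          then have "norm (?u - w n) \<le> norm (D n y)" by (rule norm_mono_pos[rotated])
          then show "norm (w n - ?u) \<le> norm (D n y)" by (simp add: norm_minus_commute)
        qed
      qed
    qed
    then show "aelem ?u" using aelem_closed wa by blast
  qed
qed

theorem theorem3p7:
  shows "(is_subalgebra (rlLwc_ops :: ('a::banach_lattice \<Rightarrow> 'a) set) regular_ops \<and>
          (rlLwc_ops = (regular_ops :: ('a \<Rightarrow> 'a) set) \<longleftrightarrow> limitedly_Lwc (id :: 'a \<Rightarrow> 'a)))
       \<and> (dedekind_complete TYPE('a) \<longrightarrow>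
          is_order_ideal (rlLwc_ops :: ('a \<Rightarrow> 'a) set) \<and> reg_closed (rlLwc_ops :: ('a \<Rightarrow> 'a) set))"
  using part1 part1b part2_ideal part2_closed by blast


end
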